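(* Let $\sigma^2>0$, let $P_X$ be a distribution on $\mathbb{R}^d$, let $\phi^r:\mathbb{R}^d\to\mathbb{R}^r$ be a feature map, let $L\in\mathbb{R}^{r\times r}$ be a fixed matrix and $\phi^L(x):=L^\top\phi^r(x)\in\mathbb{R}^r$. Assume $\|\phi^L(x)\|_2\le K$ for all $x$ (training and test points), and that $\Sigma:=\mathbb{E}_{x\sim P_X}[\phi^L(x)\phi^L(x)^\top]$ satisfies $\lambda_{\min}(\Sigma)>0$. Let $\delta>0$ and let $N\ge k\ge\frac83\log(4r/\delta)\left(\frac{8K^2}{\lambda_{\min}(\Sigma)}\right)^2$. Let $\mathbf{x}_1,\ldots,\mathbf{x}_N\sim P_X$ be i.i.d., and let $s_1,\ldots,s_k\in\{1,\ldots,N\}$ be drawn uniformly without replacement. Define $\hat\Sigma_N:=\frac1N\sum_{i=1}^N\phi^L(\mathbf{x}_i)\phi^L(\mathbf{x}_i)^\top$ and $\hat\Sigma_k:=\frac1k\sum_{i=1}^k\phi^L(\mathbf{x}_{s_i})\phi^L(\mathbf{x}_{s_i})^\top$. For test points $\mathbf{x}'_1,\ldots,\mathbf{x}'_{N'}$ let $\Phi^L_{\mathbf{x}'}\in\mathbb{R}^{N'\times r}$ have rows $\phi^L(\mathbf{x}'_i)^\top$, and define $$S^B_{\mathbf{x}',\mathbf{x}'}:=\Phi^L_{\mathbf{x}'}\Big(\tfrac{1}{\sigma^2}N\hat\Sigma_N+I_r\Big)^{-1}\Phi^{L\top}_{\mathbf{x}'},\qquad S^{B,k}_{\mathbf{x}',\mathbf{x}'}:=\Phi^L_{\mathbf{x}'}\Big(\tfrac{1}{\sigma^2}N\hat\Sigma_k+I_r\Big)^{-1}\Phi^{L\top}_{\mathbf{x}'}.$$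 Then with probability at least $1-\delta$, for any $N'$ and any test points $\mathbf{x}'_1,\ldots,\mathbf{x}'_{N'}$, $$\big\|S^{B,k}_{\mathbf{x}',\mathbf{x}'}-S^B_{\mathbf{x}',\mathbf{x}'}\big\|_2\le N'\,\frac{2K^4}{\lambda_{\min}(\Sigma)}\sqrt{\frac{8\log(4r/\delta)}{3k}}.$$
   Context: $\|\cdot\|_2$ is the spectral norm and $\lambda_{\min}$ the smallest eigenvalue. $S^B$ is the (full-data) predictive covariance with features $\phi^L$ and noise variance $\sigma^2$; $S^{B,k}$ is its subsampled approximation. *)

theory Defs
  imports "HOL-Probability.Probability"
begin

definition outer :: "real^'r \<Rightarrow> real^'r \<Rightarrow> real^'r^'r" where
  "outer v w = (\<chi> i j. v $ i * w $ j)"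

definition lambda_min :: "real^'r^'r \<Rightarrow> real" where
  "lambda_min A = Min {l. \<exists>v. v \<noteq> 0 \<and> A *v v = l *\<^sub>R v}"

definition spec_norm :: "nat \<Rightarrow> (nat \<Rightarrow> nat \<Rightarrow> real) \<Rightarrow> real" where
  "spec_norm n M = Sup {sqrt (\<Sum>i<n. (\<Sum>j<n. M i j * v j)^2) | v. (\<Sum>j<n. (v j)^2) \<le> 1}"

definition second_moment :: "'d measure \<Rightarrow> ('d \<Rightarrow> real^'r) \<Rightarrow> real^'r^'r" where
  "second_moment P phi = (\<chi> i j. integral\<^sup>L P (\<lambda>x. phi x $ i * phi x $ j))"

definition pred_cov :: "real \<Rightarrow> nat \<Rightarrow> real^'r^'r \<Rightarrow> ('d \<Rightarrow> real^'r) \<Rightarrow> 'd list \<Rightarrow> nat \<Rightarrow> nat \<Rightarrow> real" where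
  "pred_cov sigma2 N Shat phi xs i j =
     phi (xs ! i) \<bullet> (matrix_inv ((real N / sigma2) *\<^sub>R Shat + mat 1) *v phi (xs ! j))"

text \<open>Index sets for uniform sampling of k indices from {0..<N} without replacement (ordered).\<close>
definition subsamples :: "nat \<Rightarrow> nat \<Rightarrow> (nat \<Rightarrow> nat) set" where
  "subsamples N k = {s \<in> {0..<k} \<rightarrow>\<^sub>E {0..<N}. inj_on s {0..<k}}"

end

theory Submission
  imports Defs
begin

definition symm :: "real^'r^'r \<Rightarrow> bool" where "symm A \<longleftrightarrow> transpose A = A"

lemma inner_mv_transpose: "x \<bullet> (A *v y) = (transpose A *v x) \<bullet> (y::real^'n)"
  by (simp add: dot_lmul_matrix)

lemma symm_swap: "symm A \<Longrightarrow> x \<bullet> (A *v y) = y \<bullet> (A *v (x::real^'n))"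
  by (metis inner_commute inner_mv_transpose symm_def)

lemma outer_mv: "outer a a *v v = (a \<bullet> v) *\<^sub>R a"
  by (simp add: vec_eq_iff outer_def matrix_vector_mult_def inner_vec_def sum_distrib_left mult_ac)

lemma quad_outer: "v \<bullet> (outer a a *v v) = (a \<bullet> v)^2"
  by (simp add: outer_mv power2_eq_square inner_commute)

lemma mv_sum: "(\<Sum>i\<in>I. M i) *v (v::real^'n) = (\<Sum>i\<in>I. M i *v v)"
  by (induction I rule: infinite_finite_induct) (auto simp: matrix_vector_mult_add_rdistrib)

lemma symm_outer: "symm (outer a a)"
  by (simp add: symm_def outer_def transpose_def vec_eq_iff mult.commute)

lemma symm_sum: "(\<And>i. i \<in> I \<Longrightarrow> symm (M i)) \<Longrightarrow> symm (\<Sum>i\<in>I. M i)"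
  by (induction I rule: infinite_finite_induct) (auto simp: symm_def transpose_def vec_eq_iff)

lemma symm_scale: "symm A \<Longrightarrow> symm (c *\<^sub>R A)"
  by (auto simp: symm_def transpose_def vec_eq_iff)

lemma symm_add: "symm A \<Longrightarrow> symm B \<Longrightarrow> symm (A + B)"
  by (auto simp: symm_def transpose_def vec_eq_iff)
lemma symm_diff: "symm A \<Longrightarrow> symm B \<Longrightarrow> symm (A - B)"
  by (auto simp: symm_def transpose_def vec_eq_iff)
lemma symm_mat1: "symm (mat 1)"
  by (simp add: symm_def transpose_mat)

lemma eig_orth:
  assumes "symm A" "A *v u = l1 *\<^sub>R u" "A *v w = l2 *\<^sub>R w" "l1 \<noteq> l2"
  shows "u \<bullet> (w::real^'n) = 0"
proof -
  have "l1 * (u \<bullet> w) = w \<bullet> (A *v u)" using assms by (simp add: inner_commute)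
  also have "\<dots> = u \<bullet> (A *v w)" using symm_swap[OF assms(1)] by metis
  also have "\<dots> = l2 * (u \<bullet> w)" using assms by simp
  finally show ?thesis using assms(4) by simp
qed

lemma eig_finite:
  assumes "symm (A::real^'n^'n)"
  shows "finite {l. \<exists>v. v \<noteq> 0 \<and> A *v v = l *\<^sub>R v}"
proof -
  define E where "E = {l. \<exists>v. v \<noteq> 0 \<and> A *v v = l *\<^sub>R v}"
  define f where "f l = (SOME v. v \<noteq> 0 \<and> A *v v = l *\<^sub>R v)" for l
  have f: "f l \<noteq> 0 \<and> A *v f l = l *\<^sub>R f l" if "l \<in> E" for l
    using that unfolding E_def f_def by (metis (mono_tags, lifting) mem_Collect_eq someI_ex)
  have inj: "inj_on f E"
  proof (rule inj_onI)
    fix a b assume ab: "a \<in> E" "b \<in> E" "f a = f b"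
    then have "a *\<^sub>R f a = b *\<^sub>R f a" using f by metis
    then show "a = b" using f[OF ab(1)] by (simp add: scaleR_cancel_right)
  qed
  have "pairwise orthogonal (f ` E)"
    unfolding pairwise_def orthogonal_def
  proof clarify
    fix a b assume ab: "a \<in> E" "b \<in> E" "f a \<noteq> f b"
    then have "a \<noteq> b" by auto
    then show "f a \<bullet> f b = 0" using eig_orth[OF assms] f ab by blast
  qed
  moreover have "0 \<notin> f ` E" using f by auto
  ultimately have "independent (f ` E)" by (rule pairwise_orthogonal_independent)
  then have "finite (f ` E)" using independent_bound by blast
  then show ?thesis using inj finite_imageD unfolding E_def by blast
qed

lemma quad_nonneg_coeff:
  fixes a b :: real
  assumes "\<And>t. 2 * t * a + t^2 * b \<ge> 0" "a \<ge> 0"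
  shows "a = 0"
proof (rule ccontr)
  assume "a \<noteq> 0" then have a: "a > 0" using assms(2) by simp
  define t where "t = - a / (2 * (\<bar>b\<bar> + 1))"
  have d: "\<bar>b\<bar> + 1 > 0" by simp
  have "2 * t * a + t^2 * b \<le> 2 * t * a + t^2 * (\<bar>b\<bar> + 1)"
    by (intro add_left_mono mult_left_mono) auto
  also have "\<dots> = (3/2) * t * a"
  proof -
    have "t * (\<bar>b\<bar> + 1) = - a / 2" using d unfolding t_def by (simp add: field_simps)
    then have "t^2 * (\<bar>b\<bar> + 1) = t * (- a / 2)" by (simp add: power2_eq_square mult.assoc)
    then show ?thesis by simp
  qed
  also have "\<dots> < 0" using a d unfolding t_def by (simp add: field_simps)
  finally show False using assms(1)[of t] by simp
qed

lemma rayleigh: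
  assumes "symm (A::real^'n^'n)"
  shows "v \<bullet> (A *v v) \<ge> lambda_min A * (norm v)^2"
proof -
  define S :: "(real^'n) set" where "S = sphere 0 1"
  obtain i :: 'n where True by simp
  have "axis i 1 \<in> S" unfolding S_def by simp
  then have Sne: "S \<noteq> {}" by auto
  have cont: "continuous_on S (\<lambda>u. u \<bullet> (A *v u))"
    by (intro continuous_intros continuous_on_id linear_continuous_on) (auto intro: linear_linear[THEN iffD1] matrix_vector_mul_linear)
  obtain u0 where u0: "u0 \<in> S" "\<And>u. u \<in> S \<Longrightarrow> u0 \<bullet> (A *v u0) \<le> u \<bullet> (A *v u)"
    using continuous_attains_inf[OF _ Sne cont] unfolding S_def by (meson compact_sphere)
  define \<mu> where "\<mu> = u0 \<bullet> (A *v u0)"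
  have nu0: "norm u0 = 1" using u0 unfolding S_def by simp
  have hom: "z \<bullet> (A *v z) \<ge> \<mu> * (norm z)^2" for z
  proof (cases "z = 0")
    case True then show ?thesis by simp
  next
    case False
    define u where "u = (1 / norm z) *\<^sub>R z"
    have "u \<in> S" using False unfolding S_def u_def by simp
    then have "\<mu> \<le> u \<bullet> (A *v u)" using u0 unfolding \<mu>_def by blast
    also have "u \<bullet> (A *v u) = (z \<bullet> (A *v z)) / (norm z)^2"
      unfolding u_def by (simp add: matrix_vector_mult_scaleR power2_eq_square)
    finally show ?thesis using False by (simp add: field_simps)
  qed
  define w where "w = A *v u0 - \<mu> *\<^sub>R u0"
  have "2 * t * (w \<bullet> w) + t^2 * (w \<bullet> (A *v w) - \<mu> * (w \<bullet> w)) \<ge> 0" for t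
  proof -
    have "0 \<le> (u0 + t *\<^sub>R w) \<bullet> (A *v (u0 + t *\<^sub>R w)) - \<mu> * (norm (u0 + t *\<^sub>R w))^2"
      using hom[of "u0 + t *\<^sub>R w"] by simp
    also have "\<dots> = (u0 \<bullet> (A *v u0) - \<mu> * (u0 \<bullet> u0)) + t * (u0 \<bullet> (A *v w) + w \<bullet> (A *v u0) - 2 * \<mu> * (u0 \<bullet> w))
                 + t^2 * (w \<bullet> (A *v w) - \<mu> * (w \<bullet> w))"
    proof -
      have e1: "(u0 + t *\<^sub>R w) \<bullet> (A *v (u0 + t *\<^sub>R w)) = u0 \<bullet> (A *v u0) + t * (u0 \<bullet> (A *v w)) + t * (w \<bullet> (A *v u0)) + t^2 * (w \<bullet> (A *v w))"
        by (simp only: matrix_vector_right_distrib matrix_vector_mult_scaleR inner_add_left inner_add_right inner_scaleR_left inner_scaleR_right power2_eq_square) (simp add: algebra_simps)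
      have e2: "(norm (u0 + t *\<^sub>R w))^2 = u0 \<bullet> u0 + 2 * t * (u0 \<bullet> w) + t^2 * (w \<bullet> w)"
        by (simp only: power2_norm_eq_inner inner_add_left inner_add_right inner_scaleR_left inner_scaleR_right inner_commute[of w u0]) (simp add: algebra_simps power2_eq_square)
      show ?thesis unfolding e1 e2 by (simp add: algebra_simps)
    qed
    also have "u0 \<bullet> (A *v u0) - \<mu> * (u0 \<bullet> u0) = 0"
      using nu0 unfolding \<mu>_def by (simp add: power2_norm_eq_inner[symmetric])
    also have "u0 \<bullet> (A *v w) + w \<bullet> (A *v u0) - 2 * \<mu> * (u0 \<bullet> w) = 2 * (w \<bullet> w)"
    proof -
      have e1: "u0 \<bullet> (A *v w) = w \<bullet> (A *v u0)" using symm_swap[OF assms, of u0 w] .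
      have "w \<bullet> (A *v u0 - \<mu> *\<^sub>R u0) = w \<bullet> (A *v u0) - \<mu> * (w \<bullet> u0)" by (simp add: inner_diff_right)
      then have e2: "w \<bullet> w = w \<bullet> (A *v u0) - \<mu> * (w \<bullet> u0)" by (simp only: w_def[symmetric])
      have e3: "u0 \<bullet> w = w \<bullet> u0" by (rule inner_commute)
      show ?thesis unfolding e1 e2 e3 by simp
    qed
    finally show ?thesis by (simp add: mult_ac)
  qed
  then have "w \<bullet> w = 0" by (intro quad_nonneg_coeff) auto
  then have "A *v u0 = \<mu> *\<^sub>R u0" unfolding w_def by simp
  then have "\<mu> \<in> {l. \<exists>v. v \<noteq> 0 \<and> A *v v = l *\<^sub>R v}" using nu0 by (auto intro!: exI[of _ u0])
  then have "lambda_min A \<le> \<mu>" unfolding lambda_min_def using eig_finite[OF assms] by (rule Min_le[rotated])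
  then show ?thesis using hom[of v] by (meson dual_order.trans mult_right_mono zero_le_power2)
qed

definition qf :: "real^'n^'n \<Rightarrow> real^'n \<Rightarrow> real" where "qf A v = v \<bullet> (A *v v)"

lemma qf_parallelogram: "qf S (u + v) + qf S (u - v) = 2 * qf S u + 2 * qf S v"
  by (simp add: qf_def matrix_vector_right_distrib matrix_vector_mult_diff_distrib inner_add_left
      inner_add_right inner_diff_left inner_diff_right algebra_simps)

lemma qf_polar_diff: "symm X \<Longrightarrow> qf X (u + v) - qf X (u - v) = 4 * (u \<bullet> (X *v v))"
  using symm_swap[of X v u]
  by (simp add: qf_def matrix_vector_right_distrib matrix_vector_mult_diff_distrib inner_add_left
      inner_add_right inner_diff_left inner_diff_right algebra_simps)

lemma qf_scale: "qf S (c *\<^sub>R v) = c^2 * qf S v"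
  by (simp add: qf_def matrix_vector_mult_scaleR power2_eq_square)

lemma qf_diff_mat: "qf (A - B) v = qf A v - qf B v"
  by (simp add: qf_def matrix_vector_mult_diff_rdistrib inner_diff_right)

lemma qf_zero [simp]: "qf S 0 = 0"
  by (simp add: qf_def)

lemma polar:
  assumes sX: "symm X" and hX: "\<And>y. \<bar>qf X y\<bar> \<le> \<kappa> * qf S y" and k: "\<kappa> \<ge> 0"
    and pd: "\<And>y. y \<noteq> 0 \<Longrightarrow> qf S y > 0"
  shows "(a \<bullet> (X *v b))^2 \<le> \<kappa>^2 * qf S a * qf S b"
proof -
  define m where "m = a \<bullet> (X *v b)"
  have q0: "qf S y \<ge> 0" for y using pd[of y] by (cases "y = 0") auto
  have key: "2 * s * \<bar>m\<bar> \<le> \<kappa> * (s^2 * qf S a + qf S b)" if s: "s > 0" for s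
  proof -
    have e: "qf X (s *\<^sub>R a + b) - qf X (s *\<^sub>R a - b) = 4 * (s * m)"
      using qf_polar_diff[OF sX, of "s *\<^sub>R a" b] unfolding m_def by simp
    have p: "qf S (s *\<^sub>R a + b) + qf S (s *\<^sub>R a - b) = 2 * s^2 * qf S a + 2 * qf S b"
      using qf_parallelogram[of S "s *\<^sub>R a" b] by (simp add: qf_scale)
    have 1: "qf X (s *\<^sub>R a + b) - qf X (s *\<^sub>R a - b) \<le> \<kappa> * (qf S (s *\<^sub>R a + b) + qf S (s *\<^sub>R a - b))"
      using hX[of "s *\<^sub>R a + b"] hX[of "s *\<^sub>R a - b"] by (simp add: algebra_simps abs_le_iff)
    have 2: "qf X (s *\<^sub>R a - b) - qf X (s *\<^sub>R a + b) \<le> \<kappa> * (qf S (s *\<^sub>R a + b) + qf S (s *\<^sub>R a - b))"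
      using hX[of "s *\<^sub>R a + b"] hX[of "s *\<^sub>R a - b"] by (simp add: algebra_simps abs_le_iff)
    have "4 * (s * \<bar>m\<bar>) \<le> \<kappa> * (2 * s^2 * qf S a + 2 * qf S b)"
      using 1 2 e p s by (cases "m \<ge> 0") (auto simp: abs_if)
    then show ?thesis by (simp add: algebra_simps)
  qed
  show ?thesis
  proof (cases "a = 0 \<or> m = 0")
    case True
    then show ?thesis using q0[of a] q0[of b] unfolding m_def by (auto intro!: mult_nonneg_nonneg)
  next
    case False
    then have qa: "qf S a > 0" and m: "\<bar>m\<bar> > 0" using pd by auto
    have kp: "\<kappa> > 0"
    proof (rule ccontr)
      assume "\<not> \<kappa> > 0" then have "\<kappa> = 0" using k by simp
      then show False using key[of 1] m by simp
    qed
    define s where "s = \<bar>m\<bar> / (\<kappa> * qf S a)"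
    have s: "s > 0" unfolding s_def using m kp qa by simp
    have "2 * s * \<bar>m\<bar> \<le> \<kappa> * (s^2 * qf S a + qf S b)" by (rule key[OF s])
    also have "s^2 * qf S a = \<bar>m\<bar> * s / \<kappa>" unfolding s_def using kp qa by (simp add: power2_eq_square field_simps)
    finally have "2 * s * \<bar>m\<bar> \<le> \<bar>m\<bar> * s + \<kappa> * qf S b" using kp by (simp add: algebra_simps)
    then have "s * \<bar>m\<bar> \<le> \<kappa> * qf S b" by simp
    then have "\<bar>m\<bar> * \<bar>m\<bar> \<le> \<kappa> * qf S b * (\<kappa> * qf S a)" unfolding s_def using kp qa
      by (simp add: field_simps)
    then show ?thesis unfolding m_def[symmetric] by (simp add: power2_eq_square abs_mult_self_eq mult_ac)
  qed
qed

lemma qf_nonneg_pd: "(\<And>y. y \<noteq> 0 \<Longrightarrow> qf S y > 0) \<Longrightarrow> qf S y \<ge> 0"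
  by (cases "y = 0") (auto intro: less_imp_le)

lemma cauchy_qf:
  assumes "symm S" "\<And>y. y \<noteq> 0 \<Longrightarrow> qf S y > 0"
  shows "a \<bullet> (S *v b) \<le> sqrt (qf S a) * sqrt (qf S b)"
proof -
  have "(a \<bullet> (S *v b))^2 \<le> 1^2 * qf S a * qf S b"
    by (rule polar[OF assms(1) _ _ assms(2)]) (auto intro: qf_nonneg_pd[OF assms(2)])
  then have "\<bar>a \<bullet> (S *v b)\<bar> \<le> sqrt (qf S a * qf S b)"
    by (simp add: real_le_rsqrt)
  then show ?thesis by (simp add: real_sqrt_mult)
qed

lemma qf_triangle:
  assumes "symm S" "\<And>y. y \<noteq> 0 \<Longrightarrow> qf S y > 0"
  shows "sqrt (qf S (a + b)) \<le> sqrt (qf S a) + sqrt (qf S b)"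
proof -
  have q0: "qf S y \<ge> 0" for y by (rule qf_nonneg_pd[OF assms(2)])
  have "qf S (a + b) = qf S a + 2 * (a \<bullet> (S *v b)) + qf S b"
    using symm_swap[OF assms(1), of b a]
    by (simp add: qf_def matrix_vector_right_distrib inner_add_left inner_add_right algebra_simps)
  also have "\<dots> \<le> qf S a + 2 * (sqrt (qf S a) * sqrt (qf S b)) + qf S b"
    using cauchy_qf[OF assms, of a b] by simp
  also have "\<dots> = (sqrt (qf S a) + sqrt (qf S b))^2"
    using q0[of a] q0[of b] by (simp add: power2_eq_square algebra_simps)
  finally show ?thesis by (simp add: real_sqrt_le_iff real_le_lsqrt q0)
qed

lemma inv_facts:
  fixes M :: "real^'n^'n"
  assumes "\<And>y. qf M y \<ge> 0" "c \<ge> 0"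
  shows "(c *\<^sub>R M + mat 1) ** matrix_inv (c *\<^sub>R M + mat 1) = mat 1 \<and>
         matrix_inv (c *\<^sub>R M + mat 1) ** (c *\<^sub>R M + mat 1) = mat 1"
proof -
  define A where "A = c *\<^sub>R M + mat 1"
  have "\<forall>y. A *v y = 0 \<longrightarrow> y = 0"
  proof (intro allI impI)
    fix y assume "A *v y = 0"
    then have "y \<bullet> (A *v y) = 0" by simp
    then have "c * qf M y + y \<bullet> y = 0"
      unfolding A_def qf_def by (simp add: matrix_vector_mult_add_rdistrib scaleR_matrix_vector_assoc[symmetric] inner_add_right)
    moreover have "c * qf M y \<ge> 0" using assms by simp
    ultimately have "y \<bullet> y = 0" by (smt (verit) inner_ge_zero)
    then show "y = 0" by simp
  qed
  then have "\<exists>B. B ** A = mat 1" by (simp add: matrix_left_invertible_ker)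
  then have "invertible A" by (simp add: invertible_left_inverse)
  then have "A ** matrix_inv A = mat 1 \<and> matrix_inv A ** A = mat 1"
    unfolding invertible_def matrix_inv_def by (rule someI_ex)
  then show ?thesis unfolding A_def .
qed

lemma ge4:
  fixes M :: "real^'n^'n"
  assumes "c \<ge> 0"
  shows "4 * c * (a \<bullet> (M *v a)) \<le> (norm ((c *\<^sub>R M + mat 1) *v a))^2"
proof -
  have e: "(c *\<^sub>R M + mat 1) *v a = c *\<^sub>R (M *v a) + a"
    by (simp add: matrix_vector_mult_add_rdistrib scaleR_matrix_vector_assoc)
  have "(norm ((c *\<^sub>R M + mat 1) *v a))^2 = c^2 * (norm (M *v a))^2 + 2 * c * (a \<bullet> (M *v a)) + (norm a)^2"
  proof -
    have "(c *\<^sub>R (M *v a) + a) \<bullet> (c *\<^sub>R (M *v a) + a) = c * c * ((M *v a) \<bullet> (M *v a)) + c * ((M *v a) \<bullet> a) + c * (a \<bullet> (M *v a)) + a \<bullet> a"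
      by (simp only: inner_add_left inner_add_right inner_scaleR_left inner_scaleR_right) (simp add: algebra_simps)
    moreover have "(M *v a) \<bullet> a = a \<bullet> (M *v a)" by (rule inner_commute)
    ultimately show ?thesis unfolding e power2_norm_eq_inner by (simp add: power2_eq_square algebra_simps)
  qed
  moreover have "2 * c * (a \<bullet> (M *v a)) \<le> 2 * c * (norm a * norm (M *v a))"
    using norm_cauchy_schwarz[of a "M *v a"] assms by (intro mult_left_mono) auto
  moreover have "2 * c * (norm a * norm (M *v a)) \<le> c^2 * (norm (M *v a))^2 + (norm a)^2"
    using sum_squares_bound[of "c * norm (M *v a)" "norm a"] by (simp add: power2_eq_square mult_ac)
  ultimately show ?thesis by linarith
qed

lemma core:
  fixes S Sk SN :: "real^'n^'n"
  assumes sS: "symm S" and sk: "symm Sk" and sN: "symm SN" and c: "c > 0"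
    and al: "0 \<le> \<alpha>" "\<alpha> < 1"
    and pd: "\<And>y. y \<noteq> 0 \<Longrightarrow> qf S y > 0"
    and hk: "\<And>y. \<bar>qf Sk y - qf S y\<bar> \<le> \<alpha> * qf S y"
    and hN: "\<And>y. \<bar>qf SN y - qf S y\<bar> \<le> \<alpha> * qf S y"
  shows "\<bar>p \<bullet> (matrix_inv (c *\<^sub>R Sk + mat 1) *v q) - p \<bullet> (matrix_inv (c *\<^sub>R SN + mat 1) *v q)\<bar>
          \<le> \<alpha> / (2 * (1 - \<alpha>)) * norm p * norm q"
proof -
  have q0: "qf S y \<ge> 0" for y by (rule qf_nonneg_pd[OF pd])
  have qk: "qf Sk y \<ge> (1 - \<alpha>) * qf S y" for y using hk[of y] by (simp add: abs_le_iff algebra_simps)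
  have qN: "qf SN y \<ge> (1 - \<alpha>) * qf S y" for y using hN[of y] by (simp add: abs_le_iff algebra_simps)
  have qk0: "qf Sk y \<ge> 0" for y using qk[of y] q0[of y] al by (smt (verit) mult_nonneg_nonneg)
  have qN0: "qf SN y \<ge> 0" for y using qN[of y] q0[of y] al by (smt (verit) mult_nonneg_nonneg)
  define A where "A = c *\<^sub>R Sk + mat 1"
  define B where "B = c *\<^sub>R SN + mat 1"
  define Ai where "Ai = matrix_inv A"
  define Bi where "Bi = matrix_inv B"
  have IA: "A ** Ai = mat 1" "Ai ** A = mat 1" using inv_facts[OF qk0, of c] c unfolding A_def Ai_def by auto
  have IB: "B ** Bi = mat 1" "Bi ** B = mat 1" using inv_facts[OF qN0, of c] c unfolding B_def Bi_def by auto
  define a where "a = Ai *v p"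
  define b where "b = Bi *v q"
  have Aa: "A *v a = p" unfolding a_def by (simp add: matrix_vector_mul_assoc IA)
  have Bb: "B *v b = q" unfolding b_def by (simp add: matrix_vector_mul_assoc IB)
  have symA: "symm A" unfolding A_def by (intro symm_add symm_scale sk symm_mat1)
  have d1: "Ai *v q - Bi *v q = Ai *v ((B - A) *v b)"
  proof -
    have "Ai *v (A *v b) = b" by (simp add: matrix_vector_mul_assoc IA(2))
    then have "Bi *v q = Ai *v (A *v b)" unfolding b_def by simp
    then have "Ai *v q - Bi *v q = Ai *v (q - A *v b)" by (simp add: matrix_vector_mult_diff_distrib)
    also have "q - A *v b = (B - A) *v b" using Bb by (simp add: matrix_vector_mult_diff_rdistrib)
    finally show ?thesis .
  qed
  have pA: "p \<bullet> (Ai *v y) = a \<bullet> y" for y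
  proof -
    have "p \<bullet> (Ai *v y) = (Ai *v y) \<bullet> (A *v a)" using Aa by (simp add: inner_commute)
    also have "\<dots> = (transpose A *v (Ai *v y)) \<bullet> a" by (rule inner_mv_transpose)
    also have "\<dots> = y \<bullet> a" using symA unfolding symm_def by (simp add: matrix_vector_mul_assoc IA)
    finally show ?thesis by (simp add: inner_commute)
  qed
  have BA: "B - A = c *\<^sub>R (SN - Sk)" unfolding A_def B_def by (simp add: algebra_simps)
  define X where "X = SN - Sk"
  have sX: "symm X" unfolding X_def by (intro symm_diff sN sk)
  have lhs: "p \<bullet> (Ai *v q) - p \<bullet> (Bi *v q) = c * (a \<bullet> (X *v b))"
  proof -
    have "p \<bullet> (Ai *v q) - p \<bullet> (Bi *v q) = p \<bullet> (Ai *v q - Bi *v q)" by (simp add: inner_diff_right)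
    also have "\<dots> = a \<bullet> ((B - A) *v b)" unfolding d1 pA ..
    also have "\<dots> = c * (a \<bullet> (X *v b))" unfolding BA X_def by (simp add: scaleR_matrix_vector_assoc[symmetric])
    finally show ?thesis .
  qed
  have hX: "\<bar>qf X y\<bar> \<le> (2 * \<alpha>) * qf S y" for y
    using hk[of y] hN[of y] unfolding X_def qf_diff_mat by (simp add: abs_le_iff)
  have pol: "(a \<bullet> (X *v b))^2 \<le> (2 * \<alpha>)^2 * qf S a * qf S b"
    by (rule polar[OF sX hX _ pd]) (use al in simp)
  have ca: "4 * (1 - \<alpha>) * (c * qf S a) \<le> (norm p)^2"
  proof -
    have "4 * (1 - \<alpha>) * (c * qf S a) = 4 * c * ((1 - \<alpha>) * qf S a)" by (simp add: mult_ac)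
    also have "\<dots> \<le> 4 * c * qf Sk a" using qk[of a] c by (intro mult_left_mono) auto
    also have "\<dots> \<le> (norm p)^2" using ge4[where c=c and M=Sk and a=a] c Aa unfolding A_def qf_def by simp
    finally show ?thesis .
  qed
  have cb: "4 * (1 - \<alpha>) * (c * qf S b) \<le> (norm q)^2"
  proof -
    have "4 * (1 - \<alpha>) * (c * qf S b) = 4 * c * ((1 - \<alpha>) * qf S b)" by (simp add: mult_ac)
    also have "\<dots> \<le> 4 * c * qf SN b" using qN[of b] c by (intro mult_left_mono) auto
    also have "\<dots> \<le> (norm q)^2" using ge4[where c=c and M=SN and a=b] c Bb unfolding B_def qf_def by simp
    finally show ?thesis .
  qed
  have om: "1 - \<alpha> > 0" using al by simp
  have "(c * (a \<bullet> (X *v b)))^2 \<le> c^2 * ((2 * \<alpha>)^2 * qf S a * qf S b)"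
    using mult_left_mono[OF pol, of "c^2"] by (simp add: power_mult_distrib)
  also have "\<dots> = (2 * \<alpha>)^2 * (c * qf S a) * (c * qf S b)" by (simp add: power2_eq_square mult_ac)
  also have "\<dots> \<le> (2 * \<alpha>)^2 * ((norm p)^2 / (4 * (1 - \<alpha>))) * ((norm q)^2 / (4 * (1 - \<alpha>)))"
  proof -
    have 1: "c * qf S a \<le> (norm p)^2 / (4 * (1 - \<alpha>))" using ca om by (simp add: field_simps)
    have 2: "c * qf S b \<le> (norm q)^2 / (4 * (1 - \<alpha>))" using cb om by (simp add: field_simps)
    have 3: "c * qf S a \<ge> 0" "c * qf S b \<ge> 0" using c q0 by auto
    have 4: "(norm p)^2 / (4 * (1 - \<alpha>)) \<ge> 0" using om by simp
    have 5: "(2 * \<alpha>)^2 * (c * qf S a) \<le> (2 * \<alpha>)^2 * ((norm p)^2 / (4 * (1 - \<alpha>)))"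
      by (rule mult_left_mono[OF 1]) simp
    have 6: "0 \<le> (2 * \<alpha>)^2 * ((norm p)^2 / (4 * (1 - \<alpha>)))"
      by (rule mult_nonneg_nonneg[OF _ 4]) simp
    show ?thesis by (rule mult_mono[OF 5 2 6 3(2)])
  qed
  also have "\<dots> = (\<alpha> / (2 * (1 - \<alpha>)) * norm p * norm q)^2"
  proof -
    define D where "D = 1 - \<alpha>"
    have D: "D > 0" unfolding D_def using om .
    show ?thesis unfolding D_def[symmetric] using D by (simp add: field_simps power2_eq_square)
  qed
  finally have sq: "(c * (a \<bullet> (X *v b)))^2 \<le> (\<alpha> / (2 * (1 - \<alpha>)) * norm p * norm q)^2" .
  have nn: "\<alpha> / (2 * (1 - \<alpha>)) * norm p * norm q \<ge> 0" using al om by simp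
  have "\<bar>c * (a \<bullet> (X *v b))\<bar> \<le> \<alpha> / (2 * (1 - \<alpha>)) * norm p * norm q"
    using sq nn by (metis abs_le_square_iff abs_of_nonneg)
  then show ?thesis unfolding lhs[unfolded Ai_def Bi_def A_def B_def] .
qed

lemma qf_neg: "qf S (- v) = qf S v"
  using qf_scale[of S "-1" v] by simp

lemma qf_sym_diff: "symm X \<Longrightarrow> qf X u - qf X v = (u - v) \<bullet> (X *v (u + v))"
  using symm_swap[of X u v]
  by (simp add: qf_def matrix_vector_right_distrib inner_diff_left inner_add_right algebra_simps)

lemma exists_nonzero_vec: "\<exists>y::real^'n. y \<noteq> 0"
proof -
  obtain i :: 'n where True by simp
  have "axis i (1::real) \<noteq> 0" by (simp add: axis_eq_0_iff)
  then show ?thesis by blast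
qed

lemma net_argument:
  fixes X S :: "real^'n^'n" and G :: "(real^'n) set"
  assumes sX: "symm X" and sS: "symm S" and pd: "\<And>y. y \<noteq> 0 \<Longrightarrow> qf S y > 0"
    and bX: "\<And>y. \<bar>qf X y\<bar> \<le> BX * qf S y"
    and net: "\<And>u. qf S u = 1 \<Longrightarrow> \<exists>v\<in>G. qf S (u - v) \<le> \<nu>^2"
    and nu: "\<nu> \<ge> 0" "2 * \<nu> + \<nu>^2 < 1"
    and good: "\<And>v. v \<in> G \<Longrightarrow> \<bar>qf X v\<bar> \<le> \<epsilon> * qf S v"
    and eps: "\<epsilon> \<ge> 0"
  shows "\<bar>qf X y\<bar> \<le> \<epsilon> * (1 + \<nu>)^2 / (1 - 2 * \<nu> - \<nu>^2) * qf S y"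
proof -
  have q0: "qf S y \<ge> 0" for y by (rule qf_nonneg_pd[OF pd])
  define U where "U = {u. qf S u = 1}"
  define \<alpha> where "\<alpha> = Sup ((\<lambda>u. \<bar>qf X u\<bar>) ` U)"
  have norml: "qf S ((1 / sqrt (qf S y)) *\<^sub>R y) = 1" if "y \<noteq> 0" for y
    using pd[OF that] by (simp add: qf_scale power_divide)
  obtain y0 :: "real^'n" where "y0 \<noteq> 0" using exists_nonzero_vec by blast
  then have Une: "U \<noteq> {}" using norml unfolding U_def by blast
  have bU: "\<bar>qf X u\<bar> \<le> BX" if "u \<in> U" for u using bX[of u] that by (simp add: U_def)
  have bdd: "bdd_above ((\<lambda>u. \<bar>qf X u\<bar>) ` U)"
    using bU by (intro bdd_aboveI) auto
  have le_alpha: "\<bar>qf X u\<bar> \<le> \<alpha>" if "u \<in> U" for u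
    unfolding \<alpha>_def using that bdd by (intro cSup_upper) auto
  have a0: "\<alpha> \<ge> 0" using le_alpha Une by (meson abs_ge_zero all_not_in_conv order_trans)
  have claim: "\<bar>qf X y\<bar> \<le> \<alpha> * qf S y" for y
  proof (cases "y = 0")
    case True then show ?thesis by simp
  next
    case False
    define u where "u = (1 / sqrt (qf S y)) *\<^sub>R y"
    have "u \<in> U" using norml[OF False] unfolding U_def u_def by simp
    then have "\<bar>qf X u\<bar> \<le> \<alpha>" by (rule le_alpha)
    moreover have "qf X u = qf X y / qf S y" unfolding u_def using pd[OF False] by (simp add: qf_scale power_divide)
    ultimately show ?thesis using pd[OF False] by (simp add: abs_div field_simps)
  qed
  have step: "\<bar>qf X u\<bar> \<le> \<epsilon> * (1 + \<nu>)^2 + \<alpha> * (\<nu> * (2 + \<nu>))" if u: "u \<in> U" for u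
  proof -
    have qu: "qf S u = 1" using u unfolding U_def by simp
    obtain v where v: "v \<in> G" "qf S (u - v) \<le> \<nu>^2" using net[OF qu] by blast
    have suv: "sqrt (qf S (u - v)) \<le> \<nu>" using v(2) nu by (simp add: real_sqrt_le_iff real_le_lsqrt)
    have "sqrt (qf S v) \<le> sqrt (qf S u) + sqrt (qf S (v - u))"
      using qf_triangle[OF sS pd, of u "v - u"] by simp
    also have "qf S (v - u) = qf S (u - v)" using qf_neg[of S "u - v"] by simp
    finally have "sqrt (qf S v) \<le> 1 + \<nu>" using qu suv by simp
    then have qv: "qf S v \<le> (1 + \<nu>)^2" by (rule sqrt_le_D)
    have "sqrt (qf S (u + v)) \<le> sqrt (qf S u) + sqrt (qf S v)" by (rule qf_triangle[OF sS pd])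
    also have "\<dots> \<le> 2 + \<nu>" using qu \<open>sqrt (qf S v) \<le> 1 + \<nu>\<close> by simp
    finally have squv: "sqrt (qf S (u + v)) \<le> 2 + \<nu>" .
    have "((u - v) \<bullet> (X *v (u + v)))^2 \<le> \<alpha>^2 * qf S (u - v) * qf S (u + v)"
      by (rule polar[OF sX claim a0 pd])
    then have "\<bar>(u - v) \<bullet> (X *v (u + v))\<bar> \<le> \<alpha> * (sqrt (qf S (u - v)) * sqrt (qf S (u + v)))"
    proof -
      assume h: "((u - v) \<bullet> (X *v (u + v)))^2 \<le> \<alpha>^2 * qf S (u - v) * qf S (u + v)"
      have "\<bar>(u - v) \<bullet> (X *v (u + v))\<bar> = sqrt (((u - v) \<bullet> (X *v (u + v)))^2)" by simp
      also have "\<dots> \<le> sqrt (\<alpha>^2 * qf S (u - v) * qf S (u + v))" using h by (rule real_sqrt_le_mono)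
      also have "\<dots> = \<alpha> * (sqrt (qf S (u - v)) * sqrt (qf S (u + v)))" using a0 by (simp add: real_sqrt_mult)
      finally show ?thesis .
    qed
    also have "\<dots> \<le> \<alpha> * (\<nu> * (2 + \<nu>))"
      using suv squv a0 nu q0[of "u + v"] by (intro mult_left_mono mult_mono) auto
    finally have 2: "\<bar>(u - v) \<bullet> (X *v (u + v))\<bar> \<le> \<alpha> * (\<nu> * (2 + \<nu>))" .
    have 1: "\<bar>qf X v\<bar> \<le> \<epsilon> * (1 + \<nu>)^2" using good[OF v(1)] qv eps by (meson mult_left_mono order_trans)
    have "qf X u = qf X v + (u - v) \<bullet> (X *v (u + v))" using qf_sym_diff[OF sX, of u v] by simp
    then show ?thesis using 1 2 by linarith
  qed
  have "\<alpha> \<le> \<epsilon> * (1 + \<nu>)^2 + \<alpha> * (\<nu> * (2 + \<nu>))"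
    unfolding \<alpha>_def using Une step by (intro cSup_least) (auto simp: \<alpha>_def)
  then have "\<alpha> * (1 - 2 * \<nu> - \<nu>^2) \<le> \<epsilon> * (1 + \<nu>)^2" by (simp add: algebra_simps power2_eq_square)
  then have al: "\<alpha> \<le> \<epsilon> * (1 + \<nu>)^2 / (1 - 2 * \<nu> - \<nu>^2)" using nu by (simp add: field_simps)
  show ?thesis using claim[of y] al q0[of y] by (meson mult_right_mono order_trans)
qed

lemma norm2_vec: "(norm (x::real^'n))^2 = (\<Sum>i\<in>UNIV. (x$i)^2)"
  by (simp only: power2_norm_eq_inner) (simp add: inner_vec_def power2_eq_square)

lemma grid_net:
  fixes S :: "real^'n^'n"
  assumes lam: "lam > 0" and lo: "\<And>y. lam * (norm y)^2 \<le> qf S y"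
    and up: "\<And>y. qf S y \<le> K2 * (norm y)^2" and K2: "K2 > 0" and nu: "\<nu> > 0"
  defines "h \<equiv> 2 * \<nu> / sqrt (K2 * CARD('n))"
  defines "m \<equiv> nat \<lceil>1 / (sqrt lam * h)\<rceil>"
  shows "\<exists>G. finite G \<and> card G \<le> (2 * m + 1) ^ CARD('n) \<and> (\<forall>u. qf S u = 1 \<longrightarrow> (\<exists>v\<in>G. qf S (u - v) \<le> \<nu>^2))"
proof -
  define Gr where "Gr = (\<lambda>j::int. h * of_int j) ` {- int m..int m}"
  define G :: "(real^'n) set" where "G = vec_lambda ` (PiE UNIV (\<lambda>_. Gr))"
  have h: "h > 0" unfolding h_def using nu K2 by simp
  have h2: "h^2 = 4 * \<nu>^2 / (K2 * CARD('n))" unfolding h_def using K2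
    by (simp add: power_divide power_mult_distrib)
  have fGr: "finite Gr" unfolding Gr_def by simp
  have cGr: "card Gr \<le> 2 * m + 1" unfolding Gr_def
    using card_image_le[of "{- int m..int m}" "\<lambda>j::int. h * of_int j"] by simp
  have "finite G" unfolding G_def using fGr by (simp add: finite_PiE)
  moreover have "card G \<le> (2 * m + 1) ^ CARD('n)"
  proof -
    have "card G \<le> card (PiE (UNIV::'n set) (\<lambda>_. Gr))" unfolding G_def
      by (rule card_image_le) (simp add: fGr finite_PiE)
    also have "\<dots> = card Gr ^ CARD('n)" by (simp add: card_PiE)
    also have "\<dots> \<le> (2 * m + 1) ^ CARD('n)" using cGr by (rule power_mono) simp
    finally show ?thesis .
  qed
  moreover have "\<exists>v\<in>G. qf S (u - v) \<le> \<nu>^2" if qu: "qf S u = 1" for u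
  proof -
    have "lam * (norm u)^2 \<le> 1" using lo[of u] qu by simp
    then have "(norm u)^2 \<le> 1 / lam" using lam by (simp add: field_simps)
    then have nu_le: "norm u \<le> 1 / sqrt lam" using lam
      by (metis norm_ge_zero real_le_rsqrt real_sqrt_divide real_sqrt_one)
    define j where "j i = round (u$i / h)" for i
    have xm: "\<bar>u$i / h\<bar> \<le> real m" for i
    proof -
      have "\<bar>u$i / h\<bar> = \<bar>u$i\<bar> / h" using h by (simp add: abs_div)
      also have "\<dots> \<le> (1 / sqrt lam) / h" using component_le_norm_cart[of u i] nu_le h
        by (intro divide_right_mono) auto
      also have "\<dots> = 1 / (sqrt lam * h)" by simp
      also have "\<dots> \<le> real m" unfolding m_def by (rule real_nat_ceiling_ge)
      finally show ?thesis .
    qed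
    have jm: "j i \<in> {- int m..int m}" for i
    proof -
      have b: "- real m \<le> u$i / h" "u$i / h \<le> real m" using xm[of i] unfolding abs_le_iff by linarith+
      have "round (- real m) \<le> j i" "j i \<le> round (real m)" unfolding j_def
        by (rule round_mono, rule b(1)) (rule round_mono, rule b(2))
      moreover have "round (- real m) = - int m" "round (real m) = int m"
        by (metis of_int_minus of_int_of_nat_eq round_of_int)+
      ultimately show ?thesis by simp
    qed
    define v :: "real^'n" where "v = (\<chi> i. h * of_int (j i))"
    have "(\<lambda>i. h * of_int (j i)) \<in> PiE UNIV (\<lambda>_. Gr)" unfolding Gr_def PiE_UNIV_domain using jm by auto
    then have "v \<in> G" unfolding G_def v_def by (rule imageI)
    moreover have "qf S (u - v) \<le> \<nu>^2"
    proof -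
      have ci: "((u - v)$i)^2 \<le> h^2 / 4" for i
      proof -
        have "(u - v)$i = h * (u$i / h - of_int (round (u$i / h)))" unfolding v_def j_def using h
          by (simp add: algebra_simps)
        then have "\<bar>(u - v)$i\<bar> \<le> h * (1/2)" using of_int_round_abs_le[of "u$i / h"] h
          by (simp add: abs_mult abs_minus_commute)
        then have "\<bar>(u - v)$i\<bar>^2 \<le> (h * (1/2))^2" by (rule power_mono) simp
        then show ?thesis by (simp add: power_mult_distrib power_divide)
      qed
      have "(norm (u - v))^2 \<le> CARD('n) * (h^2 / 4)"
        unfolding norm2_vec using sum_mono[of UNIV "\<lambda>i. ((u - v)$i)^2" "\<lambda>_. h^2/4", OF ci] by simp
      then have "qf S (u - v) \<le> K2 * (CARD('n) * (h^2 / 4))" using up[of "u - v"] K2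
        by (meson mult_left_mono less_imp_le order_trans)
      also have "\<dots> = \<nu>^2" unfolding h2 using K2 by (simp add: field_simps)
      finally show ?thesis .
    qed
    ultimately show ?thesis by blast
  qed
  ultimately show ?thesis by blast
qed

lemma exp_convex_bound: "0 \<le> (\<theta>::real) \<Longrightarrow> \<theta> \<le> 1 \<Longrightarrow> exp (\<theta> * z) \<le> 1 - \<theta> + \<theta> * exp z"
  using convex_onD[OF exp_convex, of \<theta> 0 z] by simp

lemma ineq_up:
  fixes e :: real
  assumes "0 \<le> e" "e \<le> 1/3"
  shows "e^2 / 3 \<le> (1 + e) * ln (1 + e) - e"
proof -
  define f where "f x = (1 + x) * ln (1 + x) - x - x^2 / 3" for x :: real
  have "f 0 \<le> f e"
  proof (rule DERIV_nonneg_imp_nondecreasing[OF assms(1)])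
    fix x :: real assume x: "0 \<le> x" "x \<le> e"
    have d: "DERIV f x :> ln (1 + x) - 2 * x / 3"
      unfolding f_def using x
      by (auto intro!: derivative_eq_intros simp: divide_simps)
    have "x - x^2 \<le> ln (1 + x)" using x assms by (intro ln_one_plus_pos_lower_bound) auto
    moreover have "2 * x / 3 \<le> x - x^2"
    proof -
      have "3 * x \<le> 1" using x assms by simp
      then have "x * (3 * x) \<le> x * 1" using x by (intro mult_left_mono) auto
      then show ?thesis by (simp add: power2_eq_square)
    qed
    ultimately show "\<exists>y. DERIV f x :> y \<and> 0 \<le> y" using d by (intro exI[of _ "ln (1 + x) - 2 * x / 3"]) auto
  qed
  then show ?thesis unfolding f_def by simp
qed

lemma ineq_low:
  fixes e :: real
  assumes "0 \<le> e" "e \<le> 1/3"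
  shows "e^2 / 3 \<le> (1 - e) * ln (1 - e) + e"
proof -
  define f where "f x = (1 - x) * ln (1 - x) + x - x^2 / 3" for x :: real
  have "f 0 \<le> f e"
  proof (rule DERIV_nonneg_imp_nondecreasing[OF assms(1)])
    fix x :: real assume x: "0 \<le> x" "x \<le> e"
    have d: "DERIV f x :> - ln (1 - x) - 2 * x / 3"
      unfolding f_def using x assms
      by (auto intro!: derivative_eq_intros simp: divide_simps)
    have "ln (1 - x) \<le> (1 - x) - 1" using x assms by (intro ln_le_minus_one) auto
    then show "\<exists>y. DERIV f x :> y \<and> 0 \<le> y" using d x by (intro exI[of _ "- ln (1 - x) - 2 * x / 3"]) auto
  qed
  then show ?thesis unfolding f_def by simp
qed

lemma mgf_bound:
  assumes P: "prob_space P" and g: "g \<in> borel_measurable P"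
    and g0: "\<And>y. 0 \<le> g y" and gb: "\<And>y. g y \<le> b" and b: "b > 0"
  shows "(\<integral>\<^sup>+y. ennreal (exp (l * g y)) \<partial>P) \<le> ennreal (exp (integral\<^sup>L P g * ((exp (l * b) - 1) / b)))"
proof -
  interpret prob_space P by (rule P)
  define C where "C = (exp (l * b) - 1) / b"
  have pt: "exp (l * g y) \<le> 1 + g y * C" for y
  proof -
    have "exp (l * g y) = exp ((g y / b) * (l * b))" using b by simp
    also have "\<dots> \<le> 1 - g y / b + g y / b * exp (l * b)"
      using g0[of y] gb[of y] b by (intro exp_convex_bound) auto
    also have "\<dots> = 1 + g y * C" unfolding C_def using b by (simp add: field_simps)
    finally show ?thesis .
  qed
  have ig: "integrable P g"
    by (rule integrable_const_bound[where B = b]) (use g0 gb g in auto)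
  have ig2: "integrable P (\<lambda>y. 1 + g y * C)" using ig by auto
  have "(\<integral>\<^sup>+y. ennreal (exp (l * g y)) \<partial>P) \<le> (\<integral>\<^sup>+y. ennreal (1 + g y * C) \<partial>P)"
    by (intro nn_integral_mono ennreal_leI pt)
  also have "\<dots> = ennreal (\<integral>y. 1 + g y * C \<partial>P)"
  proof (rule nn_integral_eq_integral[OF ig2])
    show "AE y in P. 0 \<le> 1 + g y * C" using pt by (intro AE_I2) (smt (verit) exp_gt_zero)
  qed
  also have "(\<integral>y. 1 + g y * C \<partial>P) = 1 + integral\<^sup>L P g * C"
    using ig by (simp add: prob_space)
  also have "ennreal (1 + integral\<^sup>L P g * C) \<le> ennreal (exp (integral\<^sup>L P g * C))"
    by (intro ennreal_leI) (metis add.commute exp_ge_add_one_self)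
  finally show ?thesis unfolding C_def .
qed

lemma prod_integral_PiM:
  assumes P: "prob_space P" and I: "finite I" and J: "J \<subseteq> I" and F: "F \<in> borel_measurable P"
  shows "(\<integral>\<^sup>+x. ennreal (exp (\<Sum>j\<in>J. F (x j))) \<partial>PiM I (\<lambda>_. P)) = (\<integral>\<^sup>+y. ennreal (exp (F y)) \<partial>P) ^ card J"
proof -
  interpret product_sigma_finite "\<lambda>_. P"
    unfolding product_sigma_finite_def using P by (simp add: prob_space_imp_sigma_finite)
  define G where "G i y = (if i \<in> J then ennreal (exp (F y)) else 1)" for i y
  have fJ: "finite J" using I J finite_subset by blast
  have "(\<integral>\<^sup>+x. ennreal (exp (\<Sum>j\<in>J. F (x j))) \<partial>PiM I (\<lambda>_. P)) = (\<integral>\<^sup>+x. (\<Prod>i\<in>I. G i (x i)) \<partial>PiM I (\<lambda>_. P))"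
  proof (intro nn_integral_cong)
    fix x
    have "(\<Prod>i\<in>I. G i (x i)) = (\<Prod>i\<in>J. ennreal (exp (F (x i))))"
      unfolding G_def using prod.If_cases[OF I, of "\<lambda>i. i \<in> J" "\<lambda>i. ennreal (exp (F (x i)))" "\<lambda>_. 1"] J
      by (simp add: Int_absorb1 Int_commute)
    also have "\<dots> = ennreal (exp (\<Sum>j\<in>J. F (x j)))"
      by (simp add: prod_ennreal exp_sum fJ)
    finally show "ennreal (exp (\<Sum>j\<in>J. F (x j))) = (\<Prod>i\<in>I. G i (x i))" by simp
  qed
  also have "\<dots> = (\<Prod>i\<in>I. integral\<^sup>N P (G i))"
  proof (rule product_nn_integral_prod[OF I])
    fix i assume "i \<in> I"
    show "G i \<in> borel_measurable P" unfolding G_def using F by (cases "i \<in> J") auto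
  qed
  also have "\<dots> = (\<Prod>i\<in>I. (if i \<in> J then (\<integral>\<^sup>+y. ennreal (exp (F y)) \<partial>P) else 1))"
  proof (intro prod.cong refl)
    fix i
    have "(\<integral>\<^sup>+y. 1 \<partial>P) = 1" using P by (simp add: prob_space.emeasure_space_1)
    then show "integral\<^sup>N P (G i) = (if i \<in> J then (\<integral>\<^sup>+y. ennreal (exp (F y)) \<partial>P) else 1)"
      unfolding G_def by simp
  qed
  also have "\<dots> = (\<Prod>i\<in>J. (\<integral>\<^sup>+y. ennreal (exp (F y)) \<partial>P))"
    using prod.If_cases[OF I, of "\<lambda>i. i \<in> J" "\<lambda>i. (\<integral>\<^sup>+y. ennreal (exp (F y)) \<partial>P)" "\<lambda>_. 1"] J
    by (simp add: Int_absorb1 Int_commute)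
  also have "\<dots> = (\<integral>\<^sup>+y. ennreal (exp (F y)) \<partial>P) ^ card J" by simp
  finally show ?thesis .
qed

lemma chernoff_both:
  fixes P :: "'d measure" and g :: "'d \<Rightarrow> real"
  assumes P: "prob_space P" and I: "finite I" and J: "J \<subseteq> I"
    and g: "g \<in> borel_measurable P" and g0: "\<And>y. 0 \<le> g y" and gb: "\<And>y. g y \<le> b" and b: "b > 0"
    and eps: "0 < \<epsilon>" "\<epsilon> \<le> 1/3"
  defines "\<mu> \<equiv> integral\<^sup>L P g"
  defines "M \<equiv> PiM I (\<lambda>_. P)"
  shows "measure M {x\<in>space M. (1 + \<epsilon>) * (real (card J) * \<mu>) \<le> (\<Sum>j\<in>J. g (x j))} \<le> exp (- (real (card J) * \<mu> * \<epsilon>^2 / (3 * b)))"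
    and "measure M {x\<in>space M. (\<Sum>j\<in>J. g (x j)) \<le> (1 - \<epsilon>) * (real (card J) * \<mu>)} \<le> exp (- (real (card J) * \<mu> * \<epsilon>^2 / (3 * b)))"
proof -
  interpret PM: prob_space M unfolding M_def by (intro prob_space_PiM) (use P in auto)
  have meas [measurable]: "(\<lambda>x. \<Sum>j\<in>J. g (x j)) \<in> borel_measurable M"
  proof (intro borel_measurable_sum)
    fix j assume "j \<in> J" then have j: "j \<in> I" using J by auto
    show "(\<lambda>x. g (x j)) \<in> borel_measurable M"
      unfolding M_def using measurable_compose[OF measurable_component_singleton[OF j, of "\<lambda>_. P"] g] by simp
  qed
  have mu0: "\<mu> \<ge> 0" unfolding \<mu>_def using g0 by simp
  define n where "n = real (card J)"
  have n0: "n \<ge> 0" unfolding n_def by simp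
  have sp: "space M \<in> sets M" by simp
  have intg: "(\<integral>\<^sup>+x. ennreal (exp (l * (\<Sum>j\<in>J. g (x j)))) * indicator (space M) x \<partial>M)
      \<le> ennreal (exp (n * (\<mu> * ((exp (l * b) - 1) / b))))" for l
  proof -
    have "(\<integral>\<^sup>+x. ennreal (exp (l * (\<Sum>j\<in>J. g (x j)))) * indicator (space M) x \<partial>M)
        = (\<integral>\<^sup>+x. ennreal (exp (\<Sum>j\<in>J. l * g (x j))) \<partial>M)"
      by (intro nn_integral_cong) (simp add: sum_distrib_left)
    also have "\<dots> = (\<integral>\<^sup>+y. ennreal (exp (l * g y)) \<partial>P) ^ card J"
      unfolding M_def by (rule prod_integral_PiM[OF P I J]) (use g in simp)
    also have "\<dots> \<le> ennreal (exp (\<mu> * ((exp (l * b) - 1) / b))) ^ card J"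
      unfolding \<mu>_def by (intro power_mono mgf_bound[OF P g g0 gb b]) simp
    also have "\<dots> = ennreal (exp (n * (\<mu> * ((exp (l * b) - 1) / b))))"
    proof -
      have "exp (\<mu> * ((exp (l * b) - 1) / b)) ^ card J = exp (n * (\<mu> * ((exp (l * b) - 1) / b)))"
        unfolding n_def by (rule exp_of_nat_mult[symmetric])
      then show ?thesis by (simp add: ennreal_power)
    qed
    finally show ?thesis .
  qed
  show "measure M {x\<in>space M. (1 + \<epsilon>) * (real (card J) * \<mu>) \<le> (\<Sum>j\<in>J. g (x j))} \<le> exp (- (real (card J) * \<mu> * \<epsilon>^2 / (3 * b)))"
  proof -
    define s where "s = ln (1 + \<epsilon>) / b"
    have s: "s > 0" unfolding s_def using eps b by simp
    have esb: "exp (s * b) = 1 + \<epsilon>" unfolding s_def using b eps by simp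
    define a where "a = (1 + \<epsilon>) * (real (card J) * \<mu>)"
    have "emeasure M {x\<in>space M. a \<le> (\<Sum>j\<in>J. g (x j))}
        \<le> ennreal (exp (-s * a)) * (\<integral>\<^sup>+x. ennreal (exp (s * (\<Sum>j\<in>J. g (x j)))) * indicator (space M) x \<partial>M)"
      by (rule Chernoff_ineq_nn_integral_ge[OF s sp]) measurable
    also have "\<dots> \<le> ennreal (exp (-s * a)) * ennreal (exp (n * (\<mu> * ((exp (s * b) - 1) / b))))"
      by (intro mult_left_mono intg) simp
    also have "\<dots> = ennreal (exp (-s * a + n * (\<mu> * \<epsilon> / b)))"
      unfolding esb by (simp add: ennreal_mult[symmetric] exp_diff exp_minus field_simps)
    also have "-s * a + n * (\<mu> * \<epsilon> / b) = - (n * \<mu> / b) * ((1 + \<epsilon>) * ln (1 + \<epsilon>) - \<epsilon>)"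
      unfolding a_def s_def n_def using b by (simp add: field_simps)
    also have "\<dots> \<le> - (n * \<mu> / b) * (\<epsilon>^2 / 3)"
      using ineq_up[of \<epsilon>] eps mu0 n0 b by (intro mult_left_mono_neg) (auto simp: less_imp_le)
    also have "- (n * \<mu> / b) * (\<epsilon>^2 / 3) = - (real (card J) * \<mu> * \<epsilon>^2 / (3 * b))"
      unfolding n_def by (simp add: field_simps)
    finally have "emeasure M {x\<in>space M. a \<le> (\<Sum>j\<in>J. g (x j))} \<le> ennreal (exp (- (real (card J) * \<mu> * \<epsilon>^2 / (3 * b))))"
      by (meson ennreal_leI exp_le_cancel_iff order_trans)
    then show ?thesis unfolding a_def by (simp add: PM.emeasure_eq_measure)
  qed
  show "measure M {x\<in>space M. (\<Sum>j\<in>J. g (x j)) \<le> (1 - \<epsilon>) * (real (card J) * \<mu>)} \<le> exp (- (real (card J) * \<mu> * \<epsilon>^2 / (3 * b)))"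
  proof -
    define s where "s = - ln (1 - \<epsilon>) / b"
    have l1: "ln (1 - \<epsilon>) < 0" using eps by simp
    have s: "s > 0" unfolding s_def using l1 b by (simp add: field_simps)
    have esb: "exp (-s * b) = 1 - \<epsilon>" unfolding s_def using b eps by simp
    define a where "a = (1 - \<epsilon>) * (real (card J) * \<mu>)"
    have "emeasure M {x\<in>space M. (\<Sum>j\<in>J. g (x j)) \<le> a}
        \<le> ennreal (exp (s * a)) * (\<integral>\<^sup>+x. ennreal (exp (-s * (\<Sum>j\<in>J. g (x j)))) * indicator (space M) x \<partial>M)"
      by (rule Chernoff_ineq_nn_integral_le[OF s sp]) measurable
    also have "\<dots> \<le> ennreal (exp (s * a)) * ennreal (exp (n * (\<mu> * ((exp (-s * b) - 1) / b))))"
      by (intro mult_left_mono intg) simp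
    also have "\<dots> = ennreal (exp (s * a - n * (\<mu> * \<epsilon> / b)))"
      unfolding esb by (simp add: ennreal_mult[symmetric] exp_diff exp_minus field_simps)
    also have "s * a - n * (\<mu> * \<epsilon> / b) = - (n * \<mu> / b) * ((1 - \<epsilon>) * ln (1 - \<epsilon>) + \<epsilon>)"
      unfolding a_def s_def n_def using b by (simp add: field_simps)
    also have "\<dots> \<le> - (n * \<mu> / b) * (\<epsilon>^2 / 3)"
      using ineq_low[of \<epsilon>] eps mu0 n0 b by (intro mult_left_mono_neg) (auto simp: less_imp_le)
    also have "- (n * \<mu> / b) * (\<epsilon>^2 / 3) = - (real (card J) * \<mu> * \<epsilon>^2 / (3 * b))"
      unfolding n_def by (simp add: field_simps)
    finally have "emeasure M {x\<in>space M. (\<Sum>j\<in>J. g (x j)) \<le> a} \<le> ennreal (exp (- (real (card J) * \<mu> * \<epsilon>^2 / (3 * b))))"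
      by (meson ennreal_leI exp_le_cancel_iff order_trans)
    then show ?thesis unfolding a_def by (simp add: PM.emeasure_eq_measure)
  qed
qed

lemma meas_mv: "(\<lambda>x. A *v f x) \<in> borel_measurable M" if "f \<in> borel_measurable M" for A :: "real^'n^'m"
  using measurable_compose[OF that borel_measurable_continuous_onI[OF linear_continuous_on[OF matrix_vector_mul_bounded_linear]]] .

lemma meas_nth: "(\<lambda>x. f x $ i) \<in> borel_measurable M" if "f \<in> borel_measurable M" for f :: "_ \<Rightarrow> real^'n"
  using measurable_compose[OF that borel_measurable_continuous_onI[OF linear_continuous_on[OF bounded_linear_vec_nth]]] .

lemma mv_vec_sum: "A *v (\<Sum>i\<in>I. f i) = (\<Sum>i\<in>I. A *v f i)" for A :: "real^'n^'m"
  by (induction I rule: infinite_finite_induct) (auto simp: matrix_vector_right_distrib)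

lemma sq_inner_bound: "(a \<bullet> v)^2 \<le> (norm a)^2 * (norm v)^2" for a v :: "'a::real_inner"
proof -
  have "\<bar>a \<bullet> v\<bar> \<le> norm a * norm v" by (rule Cauchy_Schwarz_ineq2)
  then have "\<bar>a \<bullet> v\<bar>^2 \<le> (norm a * norm v)^2" by (rule power_mono) simp
  then show ?thesis by (simp add: power_mult_distrib)
qed

lemma qf_second_moment:
  fixes \<phi> :: "'d \<Rightarrow> real^'r"
  assumes P: "prob_space P" and m: "\<phi> \<in> borel_measurable P" and K: "\<And>x. norm (\<phi> x) \<le> K"
  shows "qf (second_moment P \<phi>) v = (\<integral>y. (\<phi> y \<bullet> v)^2 \<partial>P)"
proof -
  interpret prob_space P by (rule P)
  have int: "integrable P (\<lambda>y. \<phi> y $ i * \<phi> y $ j)" for i j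
  proof (rule integrable_const_bound[where B = "K * K"])
    have "\<bar>\<phi> y $ i\<bar> \<le> K" "\<bar>\<phi> y $ j\<bar> \<le> K" for y using component_le_norm_cart K order_trans by blast+
    then show "AE y in P. norm (\<phi> y $ i * \<phi> y $ j) \<le> K * K"
      by (intro AE_I2) (simp add: abs_mult mult_mono' )
    show "(\<lambda>y. \<phi> y $ i * \<phi> y $ j) \<in> borel_measurable P"
      using meas_nth[OF m, of i] meas_nth[OF m, of j] by measurable
  qed
  have "qf (second_moment P \<phi>) v = (\<Sum>i\<in>UNIV. \<Sum>j\<in>UNIV. v $ i * v $ j * (\<integral>y. \<phi> y $ i * \<phi> y $ j \<partial>P))"
    by (simp add: qf_def second_moment_def inner_vec_def matrix_vector_mult_def sum_distrib_left mult_ac)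
  also have "\<dots> = (\<integral>y. (\<Sum>i\<in>UNIV. \<Sum>j\<in>UNIV. v $ i * v $ j * (\<phi> y $ i * \<phi> y $ j)) \<partial>P)"
    using int by (simp add: integral_sum)
  also have "\<dots> = (\<integral>y. (\<phi> y \<bullet> v)^2 \<partial>P)"
    by (simp add: inner_vec_def power2_eq_square sum_product mult_ac)
  finally show ?thesis .
qed

lemma symm_second_moment: "symm (second_moment P \<phi>)"
  by (simp add: symm_def second_moment_def transpose_def vec_eq_iff mult.commute)

lemma integral_sq_bounds:
  fixes \<phi> :: "'d \<Rightarrow> real^'r"
  assumes P: "prob_space P" and m: "\<phi> \<in> borel_measurable P" and K: "\<And>x. norm (\<phi> x) \<le> K"
  shows "(\<integral>y. (\<phi> y \<bullet> v)^2 \<partial>P) \<le> K^2 * (norm v)^2"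
    and "integrable P (\<lambda>y. (\<phi> y \<bullet> v)^2)"
proof -
  interpret prob_space P by (rule P)
  have K0: "K \<ge> 0" using K[of undefined] norm_ge_zero order_trans by blast
  have b: "(\<phi> y \<bullet> v)^2 \<le> K^2 * (norm v)^2" for y
  proof -
    have "(\<phi> y \<bullet> v)^2 \<le> (norm (\<phi> y))^2 * (norm v)^2" by (rule sq_inner_bound)
    also have "\<dots> \<le> K^2 * (norm v)^2" using K[of y] by (intro mult_right_mono power_mono) auto
    finally show ?thesis .
  qed
  show i: "integrable P (\<lambda>y. (\<phi> y \<bullet> v)^2)"
    by (rule integrable_const_bound[where B = "K^2 * (norm v)^2"]) (use b m in auto)
  have "(\<integral>y. (\<phi> y \<bullet> v)^2 \<partial>P) \<le> (\<integral>y. K^2 * (norm v)^2 \<partial>P)"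
    by (rule integral_mono[OF i]) (auto intro: b)
  then show "(\<integral>y. (\<phi> y \<bullet> v)^2 \<partial>P) \<le> K^2 * (norm v)^2" by (simp add: prob_space)
qed

lemma trace_bound:
  fixes \<phi> :: "'d \<Rightarrow> real^'r"
  assumes P: "prob_space P" and m: "\<phi> \<in> borel_measurable P" and K: "\<And>x. norm (\<phi> x) \<le> K"
    and lo: "\<And>v. lam * (norm v)^2 \<le> qf (second_moment P \<phi>) v"
  shows "real CARD('r) * lam \<le> K^2"
proof -
  interpret prob_space P by (rule P)
  have "real CARD('r) * lam = (\<Sum>i\<in>(UNIV::'r set). lam * (norm (axis i (1::real)))^2)" by simp
  also have "\<dots> \<le> (\<Sum>i\<in>UNIV. (\<integral>y. (\<phi> y \<bullet> axis i 1)^2 \<partial>P))"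
    using lo qf_second_moment[OF P m K] by (intro sum_mono) metis
  also have "\<dots> = (\<integral>y. (\<Sum>i\<in>UNIV. (\<phi> y \<bullet> axis i 1)^2) \<partial>P)"
    using integral_sq_bounds(2)[OF P m K] by (simp add: integral_sum)
  also have "\<dots> = (\<integral>y. (norm (\<phi> y))^2 \<partial>P)"
    by (simp add: inner_axis norm2_vec)
  also have "\<dots> \<le> (\<integral>y. K^2 \<partial>P)"
  proof (rule integral_mono)
    show "integrable P (\<lambda>y. (norm (\<phi> y))^2)"
      by (rule integrable_const_bound[where B = "K^2"])
         (use m K in \<open>auto intro!: AE_I2 power_mono simp: \<close>)
  qed (use K in \<open>auto intro: power_mono\<close>)
  also have "\<dots> = K^2" by (simp add: prob_space)
  finally show ?thesis .
qed

lemma qf_emp: "qf (c *\<^sub>R (\<Sum>i\<in>I. outer (w i) (w i))) v = c * (\<Sum>i\<in>I. (w i \<bullet> v)^2)"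
  by (simp add: qf_def scaleR_matrix_vector_assoc[symmetric] mv_sum inner_sum_right outer_mv
      power2_eq_square inner_commute)

lemma symm_emp: "symm (c *\<^sub>R (\<Sum>i\<in>I. outer (w i) (w i)))"
  by (intro symm_scale symm_sum symm_outer)

lemma spec_norm_bound:
  fixes D :: "real^'r^'r" and w :: "nat \<Rightarrow> real^'r"
  assumes D: "\<And>p q. \<bar>p \<bullet> (D *v q)\<bar> \<le> \<beta> * norm p * norm q"
    and w: "\<And>i. norm (w i) \<le> K" and b0: "\<beta> \<ge> 0"
  shows "spec_norm n (\<lambda>i j. w i \<bullet> (D *v w j)) \<le> real n * (\<beta> * K^2)"
  unfolding spec_norm_def
proof (rule cSup_least)
  let ?z = "sqrt (\<Sum>i<n. (\<Sum>j<n. w i \<bullet> (D *v w j) * (0::real))^2)"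
  have "?z \<in> {sqrt (\<Sum>i<n. (\<Sum>j<n. w i \<bullet> (D *v w j) * v j)^2) |v. (\<Sum>j<n. (v j)^2) \<le> 1}"
    by (intro CollectI exI[of _ "\<lambda>_. 0::real"]) simp
  then show "{sqrt (\<Sum>i<n. (\<Sum>j<n. w i \<bullet> (D *v w j) * v j)^2) |v. (\<Sum>j<n. (v j)^2) \<le> 1} \<noteq> {}"
    by blast
next
  fix z assume "z \<in> {sqrt (\<Sum>i<n. (\<Sum>j<n. w i \<bullet> (D *v w j) * v j)^2) |v. (\<Sum>j<n. (v j)^2) \<le> 1}"
  then obtain v where z: "z = sqrt (\<Sum>i<n. (\<Sum>j<n. w i \<bullet> (D *v w j) * v j)^2)" and v: "(\<Sum>j<n. (v j)^2) \<le> 1"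
    by blast
  have K0: "K \<ge> 0" using w[of 0] norm_ge_zero order_trans by blast
  define g where "g = (\<Sum>j<n. v j *\<^sub>R w j)"
  have sv: "(\<Sum>j<n. \<bar>v j\<bar>) \<le> sqrt n"
  proof (rule real_le_rsqrt)
    have "(\<Sum>j<n. \<bar>v j\<bar>)^2 \<le> (\<Sum>j<n. \<bar>v j\<bar>^2) * card {..<n}"
      by (rule sum_squared_le_sum_of_squares)
    also have "\<dots> \<le> 1 * real n" using mult_right_mono[OF v, of "real n"] by (simp add: power2_abs)
    finally show "(\<Sum>j<n. \<bar>v j\<bar>)^2 \<le> real n" by simp
  qed
  have ng: "norm g \<le> K * sqrt n"
  proof -
    have "norm g \<le> (\<Sum>j<n. \<bar>v j\<bar> * norm (w j))" unfolding g_def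
      by (rule order_trans[OF norm_sum]) simp
    also have "\<dots> \<le> (\<Sum>j<n. \<bar>v j\<bar> * K)" using w by (intro sum_mono mult_left_mono) auto
    also have "\<dots> = K * (\<Sum>j<n. \<bar>v j\<bar>)" by (simp add: sum_distrib_left mult_ac)
    also have "\<dots> \<le> K * sqrt n" using sv K0 by (rule mult_left_mono)
    finally show ?thesis .
  qed
  have row: "(\<Sum>j<n. w i \<bullet> (D *v w j) * v j)^2 \<le> (\<beta> * K^2 * sqrt n)^2" for i
  proof -
    have "(\<Sum>j<n. w i \<bullet> (D *v w j) * v j) = w i \<bullet> (D *v g)"
      unfolding g_def by (simp add: mv_vec_sum inner_sum_right matrix_vector_mult_scaleR mult.commute)
    then have "\<bar>\<Sum>j<n. w i \<bullet> (D *v w j) * v j\<bar> \<le> \<beta> * norm (w i) * norm g" using D by simp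
    also have "\<dots> \<le> \<beta> * K * (K * sqrt n)" using w[of i] ng b0 K0
      by (intro mult_mono mult_left_mono) auto
    finally have "\<bar>\<Sum>j<n. w i \<bullet> (D *v w j) * v j\<bar> \<le> \<beta> * K^2 * sqrt n" by (simp add: power2_eq_square mult_ac)
    then show ?thesis by (metis abs_ge_zero power2_abs power_mono)
  qed
  have "z \<le> sqrt (\<Sum>i<n. (\<beta> * K^2 * sqrt n)^2)" unfolding z by (intro real_sqrt_le_mono sum_mono row)
  also have "\<dots> = sqrt (real n * (\<beta> * K^2)^2 * real n)" by (simp add: power_mult_distrib)
  also have "\<dots> = real n * (\<beta> * K^2)" using b0 by (simp add: real_sqrt_mult power2_eq_square)
  finally show "z \<le> real n * (\<beta> * K^2)" .
qed

lemma numeric_bound: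
  fixes x \<delta> cG :: real and r :: nat
  assumes r: "r \<ge> 1" and xr: "x \<ge> r" and d: "0 < \<delta>" "\<delta> < 1" and cG: "0 \<le> cG" "cG \<le> (23 * x)^r"
  shows "4 * cG * exp (- (98/25 * x * ln (4 * r / \<delta>))) \<le> \<delta>"
proof -
  define L where "L = ln (4 * r / \<delta>)"
  define l2 where "l2 = ln (2::real)"
  define lr where "lr = ln (real r)"
  have x1: "x \<ge> 1" using r xr by linarith
  have x0: "x > 0" using x1 by simp
  have r0: "real r > 0" using r by simp
  have lr0: "lr \<ge> 0" unfolding lr_def using r by simp
  have l2b: "2/3 \<le> l2" unfolding l2_def by (rule ln2_ge_two_thirds)
  have ln4: "ln (4::real) = 2 * l2" unfolding l2_def using ln_realpow[of 2 2] by simp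
  have Ld: "L = 2 * l2 + lr - ln \<delta>" unfolding L_def lr_def using d r0 ln4
    by (simp add: ln_div ln_mult)
  have lnd: "ln \<delta> < 0" using d by simp
  have ln23: "ln (23::real) \<le> 5 * l2"
  proof -
    have "ln (23::real) \<le> ln 32" by simp
    also have "ln (32::real) = ln (2^5)" by simp
    also have "\<dots> = 5 * l2" unfolding l2_def by (subst ln_realpow) auto
    finally show ?thesis .
  qed
  have lnx: "r * ln x \<le> r * lr + x - r"
  proof -
    have "ln (x / r) \<le> x / r - 1" using x0 r0 by (intro ln_le_minus_one) auto
    then have "ln x - lr \<le> x / r - 1" unfolding lr_def using x0 r0 by (simp add: ln_div)
    then have "r * (ln x - lr) \<le> r * (x / r - 1)" using r0 by (intro mult_left_mono) auto
    then show ?thesis using r0 by (simp add: algebra_simps)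
  qed
  have key: "ln 4 + r * ln (23 * x) - 98/25 * x * L \<le> ln \<delta>"
  proof -
    have a1: "r * ln (23 * x) = r * ln 23 + r * ln x" using x0 by (simp add: ln_mult algebra_simps)
    have f1: "r * ln 23 \<le> 5 * (r * l2)" using mult_left_mono[OF ln23, of "real r"] by (simp add: mult_ac)
    have f2: "r * l2 \<le> x * l2" using xr l2b by (intro mult_right_mono) auto
    have f3: "r * ln x \<le> r * lr + x - r" by (rule lnx)
    have f4: "r * lr \<le> x * lr" using xr lr0 by (intro mult_right_mono) auto
    have f5: "0 \<le> x * lr" using x0 lr0 by simp
    have LL: "2 * l2 + lr \<le> L" using Ld lnd by linarith
    have c0: "98/25 * x - 1 \<ge> 0" using x1 by simp
    have e1: "(98/25 * x - 1) * (2 * l2 + lr) = 196/25 * (x * l2) + 98/25 * (x * lr) - 2 * l2 - lr"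
      by (simp add: algebra_simps)
    have e2: "(98/25 * x - 1) * L = 98/25 * (x * L) - L" by (simp add: algebra_simps)
    have "(98/25 * x - 1) * (2 * l2 + lr) \<le> (98/25 * x - 1) * L" using mult_left_mono[OF LL c0] .
    then have f6: "196/25 * (x * l2) + 98/25 * (x * lr) - 2 * l2 - lr \<le> 98/25 * (x * L) - L"
      unfolding e1 e2 .
    have e3: "(2/3) * (71/25 * x - 2) = 142/75 * x - 4/3" by (simp add: algebra_simps)
    have e4: "l2 * (71/25 * x - 2) = 71/25 * (x * l2) - 2 * l2" by (simp add: algebra_simps)
    have "(2/3) * (71/25 * x - 2) \<le> l2 * (71/25 * x - 2)" using l2b x1 by (intro mult_right_mono) auto
    then have f7: "142/75 * x - 4/3 \<le> 71/25 * (x * l2) - 2 * l2" unfolding e3 e4 .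
    have r1: "real r \<ge> 1" using r by simp
    have g: "r * ln 23 + r * ln x + L \<le> lr + 98/25 * (x * L)"
      using f1 f2 f3 f4 f5 f6 f7 r1 x1 by linarith
    have e: "98/25 * x * L = 98/25 * (x * L)" by simp
    have a8: "ln \<delta> = 2 * l2 + lr - L" using Ld by simp
    show ?thesis unfolding a8 a1 ln4 e using g by linarith
  qed
  have "4 * cG * exp (- (98/25 * x * L)) \<le> 4 * (23 * x)^r * exp (- (98/25 * x * L))"
    using cG by (intro mult_right_mono mult_left_mono) auto
  also have "\<dots> = exp (ln 4 + r * ln (23 * x) - 98/25 * x * L)"
  proof -
    have e1: "exp (real r * ln (23 * x)) = (23 * x)^r" using x0 by (simp add: exp_of_nat_mult)
    have e2: "exp (ln 4 + r * ln (23 * x) - 98/25 * x * L) = exp (ln 4) * exp (real r * ln (23 * x)) / exp (98/25 * x * L)"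
      by (simp only: exp_diff exp_add)
    have gen: "4 * A * exp (- c) = exp (ln 4) * A / exp c" for A c :: real
      by (simp add: exp_minus divide_inverse)
    show ?thesis unfolding e2 e1 by (rule gen)
  qed
  also have "\<dots> \<le> exp (ln \<delta>)" using key by simp
  also have "\<dots> = \<delta>" using d by simp
  finally show ?thesis unfolding L_def .
qed

lemma sum_meas_PM:
  fixes g :: "'d \<Rightarrow> real"
  assumes g: "g \<in> borel_measurable P" and J: "J \<subseteq> I"
  shows "(\<lambda>x. \<Sum>j\<in>J. g (x j)) \<in> borel_measurable (PiM I (\<lambda>_. P))"
proof (intro borel_measurable_sum)
  fix j assume "j \<in> J" then have j: "j \<in> I" using J by auto
  show "(\<lambda>x. g (x j)) \<in> borel_measurable (PiM I (\<lambda>_. P))"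
    using measurable_compose[OF measurable_component_singleton[OF j, of "\<lambda>_. P"] g] by simp
qed

lemma mean_dev:
  fixes T \<mu> \<epsilon> :: real and n :: nat
  assumes "n > 0" "\<not> ((1 + \<epsilon>) * (real n * \<mu>) \<le> T)" "\<not> (T \<le> (1 - \<epsilon>) * (real n * \<mu>))"
  shows "\<bar>(1 / real n) * T - \<mu>\<bar> \<le> \<epsilon> * \<mu>"
proof -
  have n: "real n > 0" using assms(1) by simp
  have "T < real n * ((1 + \<epsilon>) * \<mu>)" "real n * ((1 - \<epsilon>) * \<mu>) < T" using assms(2,3) by (simp_all add: mult_ac)
  then have "T / real n < (1 + \<epsilon>) * \<mu>" "(1 - \<epsilon>) * \<mu> < T / real n" using n
    by (simp_all add: field_simps)
  then show ?thesis by (simp add: abs_le_iff algebra_simps)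
qed

lemma good_set:
  fixes P :: "'d measure" and \<phi> :: "'d \<Rightarrow> real^'r" and S :: "real^'r^'r"
  assumes P: "prob_space P" and m: "\<phi> \<in> borel_measurable P" and Kb: "\<And>y. norm (\<phi> y) \<le> K" and K: "K > 0"
    and qS: "\<And>v. qf S v = (\<integral>y. (\<phi> y \<bullet> v)^2 \<partial>P)"
    and lo: "\<And>v. lam * (norm v)^2 \<le> qf S v" and lam: "lam > 0"
    and G: "finite G" and s: "inj_on s {..<k}" "s ` {..<k} \<subseteq> {0..<N}" and k: "1 \<le> k" "k \<le> N"
    and eps: "0 < \<epsilon>" "\<epsilon> \<le> 1/3"
  defines "PM \<equiv> PiM {0..<N} (\<lambda>_. P)"
  shows "\<exists>A\<in>sets PM. measure PM A \<ge> 1 - 4 * card G * exp (- (k * \<epsilon>^2 * lam / (3 * K^2))) \<and>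
          (\<forall>x\<in>A. \<forall>v\<in>G. \<bar>(1 / real N) * (\<Sum>i<N. (\<phi> (x i) \<bullet> v)^2) - qf S v\<bar> \<le> \<epsilon> * qf S v \<and>
                        \<bar>(1 / real k) * (\<Sum>i<k. (\<phi> (x (s i)) \<bullet> v)^2) - qf S v\<bar> \<le> \<epsilon> * qf S v)"
proof -
  interpret PMp: prob_space PM unfolding PM_def by (intro prob_space_PiM) (use P in auto)
  define g where "g v y = (\<phi> y \<bullet> v)^2" for v y
  define J1 where "J1 = {0..<N}"
  define J2 where "J2 = s ` {..<k}"
  have cJ1: "card J1 = N" unfolding J1_def by simp
  have cJ2: "card J2 = k" unfolding J2_def using card_image[OF s(1)] by simp
  have J1I: "J1 \<subseteq> {0..<N}" unfolding J1_def by simp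
  have J2I: "J2 \<subseteq> {0..<N}" unfolding J2_def using s(2) .
  have gm: "g v \<in> borel_measurable P" for v unfolding g_def using m by measurable
  have sm1[measurable]: "(\<lambda>x. \<Sum>j\<in>J1. g v (x j)) \<in> borel_measurable PM" for v
    unfolding PM_def by (rule sum_meas_PM[OF gm J1I])
  have sm2[measurable]: "(\<lambda>x. \<Sum>j\<in>J2. g v (x j)) \<in> borel_measurable PM" for v
    unfolding PM_def by (rule sum_meas_PM[OF gm J2I])
  define p where "p = exp (- (k * \<epsilon>^2 * lam / (3 * K^2)))"
  define B1 where "B1 J v = {x\<in>space PM. (1 + \<epsilon>) * (real (card J) * qf S v) \<le> (\<Sum>j\<in>J. g v (x j))}" for J v
  define B2 where "B2 J v = {x\<in>space PM. (\<Sum>j\<in>J. g v (x j)) \<le> (1 - \<epsilon>) * (real (card J) * qf S v)}" for J v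
  define B where "B v = B1 J1 v \<union> B2 J1 v \<union> B1 J2 v \<union> B2 J2 v" for v
  have Bs: "B v \<in> sets PM" for v unfolding B_def B1_def B2_def by measurable
  have chern: "measure PM (B1 J v) \<le> p \<and> measure PM (B2 J v) \<le> p"
    if v: "v \<noteq> 0" and J: "J \<subseteq> {0..<N}" "card J \<ge> k" for v J
  proof -
    define b where "b = K^2 * (norm v)^2"
    have b: "b > 0" unfolding b_def using K v by simp
    have g0: "0 \<le> g v y" for y unfolding g_def by simp
    have gb: "g v y \<le> b" for y unfolding g_def b_def
      using sq_inner_bound[of "\<phi> y" v] Kb[of y] K
      by (meson mult_right_mono norm_ge_zero order_trans power_mono zero_le_power2)
    have mu: "integral\<^sup>L P (g v) = qf S v" unfolding g_def qS ..
    have ex: "exp (- (real (card J) * qf S v * \<epsilon>^2 / (3 * b))) \<le> p"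
    proof -
      have "real k * lam * b \<le> real (card J) * qf S v * K^2"
      proof -
        have "real k * lam * b = real k * (lam * (norm v)^2) * K^2" unfolding b_def by (simp add: mult_ac)
        also have "\<dots> \<le> real (card J) * qf S v * K^2"
          using lo[of v] J(2) lam by (intro mult_right_mono mult_mono) auto
        finally show ?thesis .
      qed
      then have "real k * lam * b * \<epsilon>^2 \<le> real (card J) * qf S v * K^2 * \<epsilon>^2"
        by (rule mult_right_mono) simp
      then have "k * \<epsilon>^2 * lam / (3 * K^2) \<le> real (card J) * qf S v * \<epsilon>^2 / (3 * b)"
        using b K by (simp add: field_simps)
      then show ?thesis unfolding p_def by simp
    qed
    have c: "measure PM (B1 J v) \<le> exp (- (real (card J) * qf S v * \<epsilon>^2 / (3 * b)))"
            "measure PM (B2 J v) \<le> exp (- (real (card J) * qf S v * \<epsilon>^2 / (3 * b)))"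
      using chernoff_both[OF P finite_atLeastLessThan J(1) gm g0 gb b eps] unfolding mu B1_def B2_def PM_def
      by auto
    show ?thesis using c ex by linarith
  qed
  have Bm: "measure PM (B v) \<le> 4 * p" if v: "v \<noteq> 0" for v
  proof -
    have k1: "card J1 \<ge> k" "card J2 \<ge> k" using cJ1 cJ2 k by auto
    have s1: "B1 J1 v \<in> sets PM" "B2 J1 v \<in> sets PM" "B1 J2 v \<in> sets PM" "B2 J2 v \<in> sets PM"
      unfolding B1_def B2_def by measurable
    have "measure PM (B v) \<le> measure PM (B1 J1 v \<union> B2 J1 v \<union> B1 J2 v) + measure PM (B2 J2 v)"
      unfolding B_def using s1 by (intro measure_Un_le) auto
    also have "measure PM (B1 J1 v \<union> B2 J1 v \<union> B1 J2 v) \<le> measure PM (B1 J1 v \<union> B2 J1 v) + measure PM (B1 J2 v)"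
      using s1 by (intro measure_Un_le) auto
    also have "measure PM (B1 J1 v \<union> B2 J1 v) \<le> measure PM (B1 J1 v) + measure PM (B2 J1 v)"
      using s1 by (intro measure_Un_le) auto
    finally have "measure PM (B v) \<le> measure PM (B1 J1 v) + measure PM (B2 J1 v) + measure PM (B1 J2 v) + measure PM (B2 J2 v)"
      by simp
    then show ?thesis using chern[OF v J1I k1(1)] chern[OF v J2I k1(2)] by linarith
  qed
  define U where "U = (\<Union>v\<in>G - {0}. B v)"
  define A where "A = space PM - U"
  have Us: "U \<in> sets PM" unfolding U_def using Bs G by auto
  have As: "A \<in> sets PM" unfolding A_def using Us by auto
  have "measure PM U \<le> (\<Sum>v\<in>G - {0}. measure PM (B v))" unfolding U_def
    by (rule measure_UNION_le) (use G Bs in auto)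
  also have "\<dots> \<le> (\<Sum>v\<in>G - {0}. 4 * p)" using Bm by (intro sum_mono) auto
  also have "\<dots> = 4 * p * card (G - {0})" by simp
  also have "\<dots> \<le> 4 * p * card G" using G unfolding p_def
    by (intro mult_left_mono) (auto intro: card_mono)
  finally have mU: "measure PM U \<le> 4 * p * card G" .
  have mA: "measure PM A = 1 - measure PM U" unfolding A_def
    using PMp.finite_measure_compl[OF Us] by (simp add: PMp.prob_space)
  have pw: "\<bar>(1 / real N) * (\<Sum>i<N. (\<phi> (x i) \<bullet> v)^2) - qf S v\<bar> \<le> \<epsilon> * qf S v \<and>
            \<bar>(1 / real k) * (\<Sum>i<k. (\<phi> (x (s i)) \<bullet> v)^2) - qf S v\<bar> \<le> \<epsilon> * qf S v"
    if x: "x \<in> A" and v: "v \<in> G" for x v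
  proof (cases "v = 0")
    case True then show ?thesis by simp
  next
    case False
    have xs: "x \<in> space PM" and nB: "x \<notin> B v" using x v False unfolding A_def U_def by auto
    have e1: "(\<Sum>i<N. (\<phi> (x i) \<bullet> v)^2) = (\<Sum>j\<in>J1. g v (x j))" unfolding J1_def g_def
      by (simp add: atLeast0LessThan)
    have e2: "(\<Sum>i<k. (\<phi> (x (s i)) \<bullet> v)^2) = (\<Sum>j\<in>J2. g v (x j))" unfolding J2_def g_def
      by (simp add: sum.reindex[OF s(1)])
    have N0: "N > 0" and k0: "k > 0" using k by auto
    show ?thesis unfolding e1 e2
      using nB xs mean_dev[OF N0, of \<epsilon> "qf S v" "\<Sum>j\<in>J1. g v (x j)"] mean_dev[OF k0, of \<epsilon> "qf S v" "\<Sum>j\<in>J2. g v (x j)"]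
      unfolding B_def B1_def B2_def cJ1 cJ2 by auto
  qed
  show ?thesis
    using As mA mU pw unfolding p_def by (intro bexI[of _ A]) (auto simp: mult_ac)
qed

theorem theorem3p5:
  fixes P :: "'d::euclidean_space measure"
    and phir :: "'d \<Rightarrow> real^'r"
    and L :: "real^'r^'r"
    and sigma2 K delta :: real
    and N k :: nat
  defines "phiL \<equiv> (\<lambda>x. transpose L *v phir x)"
  defines "SigmaP \<equiv> second_moment P phiL"
  defines "M \<equiv> (PiM {0..<N} (\<lambda>_. P)) \<Otimes>\<^sub>M measure_pmf (pmf_of_set (subsamples N k))"
  assumes "sigma2 > 0"
    and "prob_space P" and "sets P = sets borel"
    and "phir \<in> borel_measurable borel"
    and "\<And>x. norm (phiL x) \<le> K"
    and "lambda_min SigmaP > 0"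
    and "delta > 0"
    and "k \<le> N"
    and "real k \<ge> 8/3 * ln (4 * CARD('r) / delta) * (8 * K^2 / lambda_min SigmaP)^2"
  shows "\<exists>E \<in> sets M. measure M E \<ge> 1 - delta \<and>
    (\<forall>(x, s) \<in> E. \<forall>xs :: 'd list.
       let SigN = (1 / real N) *\<^sub>R (\<Sum>i<N. outer (phiL (x i)) (phiL (x i)));
           Sigk = (1 / real k) *\<^sub>R (\<Sum>i<k. outer (phiL (x (s i))) (phiL (x (s i))))
       in spec_norm (length xs)
            (\<lambda>i j. pred_cov sigma2 N Sigk phiL xs i j - pred_cov sigma2 N SigN phiL xs i j)
          \<le> real (length xs) * (2 * K^4 / lambda_min SigmaP)
              * sqrt (8 * ln (4 * CARD('r) / delta) / (3 * real k)))"
proof -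
  have phiL_eq: "phiL = (\<lambda>x. transpose L *v phir x)" using \<open>phiL \<equiv> (\<lambda>x. transpose L *v phir x)\<close> by simp
  have SigmaP_eq: "SigmaP = second_moment P phiL" using \<open>SigmaP \<equiv> second_moment P phiL\<close> by simp
  have M_eq: "M = (PiM {0..<N} (\<lambda>_. P)) \<Otimes>\<^sub>M measure_pmf (pmf_of_set (subsamples N k))"
    using \<open>M \<equiv> (PiM {0..<N} (\<lambda>_. P)) \<Otimes>\<^sub>M measure_pmf (pmf_of_set (subsamples N k))\<close> by simp
  note sig = assms(4) and Pp = assms(5) and sP = assms(6) and phirm = assms(7) and Kb = assms(8)
    and lampos = assms(9) and dpos = assms(10) and kN = assms(11) and kbound = assms(12)
  have phim: "phiL \<in> borel_measurable P"
  proof -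
    have "phiL \<in> borel_measurable borel" unfolding phiL_eq by (rule meas_mv[OF phirm])
    moreover have "measurable P (borel :: (real^'r) measure) = measurable borel borel" by (rule measurable_cong_sets[OF sP refl])
    ultimately show ?thesis by simp
  qed
  define lam where "lam = lambda_min SigmaP"
  have lam: "lam > 0" unfolding lam_def by (rule lampos)
  have sS: "symm SigmaP" unfolding SigmaP_eq by (rule symm_second_moment)
  have qS: "qf SigmaP v = (\<integral>y. (phiL y \<bullet> v)^2 \<partial>P)" for v
    unfolding SigmaP_eq by (rule qf_second_moment[OF Pp phim Kb])
  have lo: "lam * (norm v)^2 \<le> qf SigmaP v" for v
    using rayleigh[OF sS, of v] unfolding lam_def qf_def by (simp add: mult.commute)
  have up: "qf SigmaP v \<le> K^2 * (norm v)^2" for v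
    using qS[of v] integral_sq_bounds(1)[OF Pp phim Kb, of v] by simp
  have pd: "qf SigmaP y > 0" if "y \<noteq> 0" for y
  proof -
    have "lam * (norm y)^2 > 0" using lam that by simp
    then show ?thesis using lo[of y] by linarith
  qed
  have tr: "real CARD('r) * lam \<le> K^2"
    by (rule trace_bound[OF Pp phim Kb]) (use lo SigmaP_eq in simp)
  have K0: "K \<ge> 0" using Kb[of undefined] norm_ge_zero order_trans by blast
  have cr1: "real CARD('r) \<ge> 1" by simp
  have K2: "K^2 > 0"
  proof -
    have "real CARD('r) * lam > 0" using lam by simp
    then show ?thesis using tr by linarith
  qed
  have Kpos: "K > 0" using K0 K2 by (cases "K = 0") auto
  define xq where "xq = K^2 / lam"
  have xr: "xq \<ge> real CARD('r)" unfolding xq_def using tr lam by (simp add: field_simps)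
  have x1: "xq \<ge> 1" using xr cr1 by linarith
  have xlam: "K^2 = xq * lam" unfolding xq_def using lam by simp
  show ?thesis
  proof (cases "delta \<ge> 1")
    case True
    show ?thesis by (rule bexI[of _ "{}"]) (use True in auto)
  next
    case False
    then have d1: "delta < 1" by simp
    define lg where "lg = ln (4 * CARD('r) / delta)"
    have lg: "lg > 0"
    proof -
      have "delta < 4 * real CARD('r)" using d1 cr1 by linarith
      then have "1 < 4 * real CARD('r) / delta" using dpos by (simp add: field_simps)
      then show ?thesis unfolding lg_def by simp
    qed
    have kb: "real k \<ge> 8/3 * lg * (8 * xq)^2"
      using kbound unfolding lg_def lam_def[symmetric] xq_def by (simp add: mult_ac)
    have kpos: "real k > 0"
    proof -
      have "8/3 * lg * (8 * xq)^2 > 0" using lg x1 by simp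
      then show ?thesis using kb by linarith
    qed
    then have k1: "k \<ge> 1" by simp
    have N1: "N \<ge> 1" using k1 kN by simp
    define t where "t = sqrt (8 * lg / (3 * real k))"
    define \<tau> where "\<tau> = 2 * xq * t"
    have t2: "t^2 = 8 * lg / (3 * real k)" unfolding t_def using lg kpos by simp
    have tpos: "t > 0" unfolding t_def using lg kpos by simp
    have taupos: "\<tau> > 0" unfolding \<tau>_def using tpos x1 by simp
    have tau2: "\<tau>^2 = 32 * xq^2 * lg / (3 * real k)" unfolding \<tau>_def using t2 by (simp add: power_mult_distrib)
    have tau_le: "\<tau> \<le> 1/4"
    proof -
      have "\<tau>^2 = 32 * xq^2 * lg / (3 * real k)" by (rule tau2)
      also have "\<dots> \<le> 32 * xq^2 * lg / (3 * (8/3 * lg * (8 * xq)^2))"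
        using kb kpos lg x1 by (intro divide_left_mono mult_left_mono) auto
      also have "\<dots> = (1/4)^2" using lg x1 by (simp add: field_simps power2_eq_square)
      finally show ?thesis using taupos by (simp add: power2_le_iff_abs_le abs_le_iff)
    qed
    define \<epsilon> where "\<epsilon> = 21/20 * \<tau>"
    define \<nu> where "\<nu> = (1/20::real)"
    define \<alpha> where "\<alpha> = \<epsilon> * (1 + \<nu>)^2 / (1 - 2 * \<nu> - \<nu>^2)"
    have eps: "0 < \<epsilon>" "\<epsilon> \<le> 1/3" unfolding \<epsilon>_def using taupos tau_le by auto
    have al_eq: "\<alpha> = 9261/7180 * \<tau>" unfolding \<alpha>_def \<epsilon>_def \<nu>_def by (simp add: power2_eq_square)
    have al: "0 \<le> \<alpha>" "\<alpha> < 1" unfolding al_eq using taupos tau_le by auto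
    have beta: "\<alpha> / (2 * (1 - \<alpha>)) \<le> \<tau>"
    proof -
      have tt: "\<tau> * \<tau> \<le> \<tau> * (1/4)" using tau_le taupos by (intro mult_left_mono) auto
      have e: "2 * \<tau> * (1 - \<alpha>) = 2 * \<tau> - 9261/3590 * (\<tau> * \<tau>)" unfolding al_eq by (simp add: algebra_simps)
      have "\<alpha> \<le> 2 * \<tau> * (1 - \<alpha>)" unfolding e using tt taupos unfolding al_eq by linarith
      then show ?thesis using al by (simp add: field_simps)
    qed
    define h where "h = 2 * \<nu> / sqrt (K^2 * CARD('r))"
    define m where "m = nat \<lceil>1 / (sqrt lam * h)\<rceil>"
    have nupos: "\<nu> > 0" unfolding \<nu>_def by simp
    obtain G where G: "finite G" "card G \<le> (2 * m + 1) ^ CARD('r)"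
      "\<And>u. qf SigmaP u = 1 \<Longrightarrow> (\<exists>v\<in>G. qf SigmaP (u - v) \<le> \<nu>^2)"
      using grid_net[OF lam lo up K2 nupos] unfolding h_def m_def by blast
    have mb: "real (2 * m + 1) \<le> 23 * xq"
    proof -
      have "1 / (sqrt lam * h) = 10 * sqrt (real CARD('r) * xq)"
        unfolding h_def \<nu>_def xq_def using lam K2 by (simp add: real_sqrt_mult real_sqrt_divide field_simps)
      also have "\<dots> \<le> 10 * xq"
      proof -
        have "sqrt (real CARD('r) * xq) \<le> sqrt (xq * xq)" using xr x1 by (intro real_sqrt_le_mono mult_right_mono) auto
        then show ?thesis using x1 by simp
      qed
      finally have "1 / (sqrt lam * h) \<le> 10 * xq" .
      then have "real m \<le> 10 * xq + 1"
      proof -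
        assume yb: "1 / (sqrt lam * h) \<le> 10 * xq"
        have hpos: "h > 0" unfolding h_def \<nu>_def using K2 by simp
        have y0: "0 \<le> 1 / (sqrt lam * h)" using lam hpos by simp
        have "real m = of_int \<lceil>1 / (sqrt lam * h)\<rceil>" unfolding m_def using y0 by simp
        also have "\<dots> \<le> 1 / (sqrt lam * h) + 1" by (rule of_int_ceiling_le_add_one)
        finally show ?thesis using yb by linarith
      qed
      then show ?thesis using x1 by simp
    qed
    have cG: "real (card G) \<le> (23 * xq) ^ CARD('r)"
    proof -
      have "real (card G) \<le> real ((2 * m + 1) ^ CARD('r))" using G(2) by linarith
      also have "\<dots> = (real (2 * m + 1)) ^ CARD('r)" by simp
      also have "\<dots> \<le> (23 * xq) ^ CARD('r)" using mb by (intro power_mono) auto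
      finally show ?thesis .
    qed
    have expo: "real k * \<epsilon>^2 * lam / (3 * K^2) = 98/25 * xq * lg"
      unfolding \<epsilon>_def power_mult_distrib tau2 xlam using kpos lam x1 by (simp add: field_simps power2_eq_square)
    have pbound: "4 * real (card G) * exp (- (real k * \<epsilon>^2 * lam / (3 * K^2))) \<le> delta"
    proof -
      have "4 * real (card G) * exp (- (98/25 * xq * ln (4 * real CARD('r) / delta))) \<le> delta"
        using numeric_bound[of "CARD('r)" xq delta "real (card G)"] xr dpos d1 cG by simp
      then show ?thesis unfolding expo lg_def by simp
    qed
    define Sub where "Sub = subsamples N k"
    have Sub_fin: "finite Sub"
    proof -
      have "Sub \<subseteq> PiE {0..<k} (\<lambda>_. {0..<N})" unfolding Sub_def subsamples_def by auto
      moreover have "finite (PiE {0..<k} (\<lambda>_. {0..<N}))" by (rule finite_PiE) auto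
      ultimately show ?thesis by (rule finite_subset)
    qed
    have Sub_ne: "Sub \<noteq> {}"
    proof -
      have "restrict (\<lambda>i. i) {0..<k} \<in> Sub" unfolding Sub_def subsamples_def using kN by (auto simp: inj_on_def)
      then show ?thesis by blast
    qed
    have Sub_prop: "inj_on s {..<k} \<and> s ` {..<k} \<subseteq> {0..<N}" if "s \<in> Sub" for s
      using that unfolding Sub_def subsamples_def by (auto simp: atLeast0LessThan PiE_def Pi_def)
    define PM where "PM = PiM {0..<N} (\<lambda>_. P)"
    interpret PMp: prob_space PM unfolding PM_def by (intro prob_space_PiM) (use Pp in auto)
    define SN where "SN x = (1 / real N) *\<^sub>R (\<Sum>i<N. outer (phiL (x i)) (phiL (x i)))" for x :: "nat \<Rightarrow> 'd"
    define Sk where "Sk x s = (1 / real k) *\<^sub>R (\<Sum>i<k. outer (phiL (x (s i))) (phiL (x (s i))))" for x :: "nat \<Rightarrow> 'd" and s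
    have "\<forall>s\<in>Sub. \<exists>A\<in>sets PM. measure PM A \<ge> 1 - delta \<and>
          (\<forall>x\<in>A. \<forall>v\<in>G. \<bar>qf (SN x) v - qf SigmaP v\<bar> \<le> \<epsilon> * qf SigmaP v \<and> \<bar>qf (Sk x s) v - qf SigmaP v\<bar> \<le> \<epsilon> * qf SigmaP v)"
    proof
      fix s assume s: "s \<in> Sub"
      obtain A where A: "A \<in> sets PM" "measure PM A \<ge> 1 - 4 * card G * exp (- (k * \<epsilon>^2 * lam / (3 * K^2)))"
        "\<And>x v. x \<in> A \<Longrightarrow> v \<in> G \<Longrightarrow> \<bar>(1 / real N) * (\<Sum>i<N. (phiL (x i) \<bullet> v)^2) - qf SigmaP v\<bar> \<le> \<epsilon> * qf SigmaP v \<and>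
                        \<bar>(1 / real k) * (\<Sum>i<k. (phiL (x (s i)) \<bullet> v)^2) - qf SigmaP v\<bar> \<le> \<epsilon> * qf SigmaP v"
        using good_set[OF Pp phim Kb Kpos qS lo lam G(1) conjunct1[OF Sub_prop[OF s]] conjunct2[OF Sub_prop[OF s]] k1 kN eps]
        unfolding PM_def by blast
      show "\<exists>A\<in>sets PM. measure PM A \<ge> 1 - delta \<and>
          (\<forall>x\<in>A. \<forall>v\<in>G. \<bar>qf (SN x) v - qf SigmaP v\<bar> \<le> \<epsilon> * qf SigmaP v \<and> \<bar>qf (Sk x s) v - qf SigmaP v\<bar> \<le> \<epsilon> * qf SigmaP v)"
      proof (intro bexI[of _ A] conjI ballI)
        show "A \<in> sets PM" by (rule A(1))
        show "measure PM A \<ge> 1 - delta" using A(2) pbound by simp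
        fix x v assume "x \<in> A" "v \<in> G"
        then show "\<bar>qf (SN x) v - qf SigmaP v\<bar> \<le> \<epsilon> * qf SigmaP v" "\<bar>qf (Sk x s) v - qf SigmaP v\<bar> \<le> \<epsilon> * qf SigmaP v"
          using A(3) unfolding SN_def Sk_def qf_emp by auto
      qed
    qed
    then obtain Af where Af: "\<And>s. s \<in> Sub \<Longrightarrow> Af s \<in> sets PM" "\<And>s. s \<in> Sub \<Longrightarrow> measure PM (Af s) \<ge> 1 - delta"
      "\<And>s x v. s \<in> Sub \<Longrightarrow> x \<in> Af s \<Longrightarrow> v \<in> G \<Longrightarrow> \<bar>qf (SN x) v - qf SigmaP v\<bar> \<le> \<epsilon> * qf SigmaP v \<and> \<bar>qf (Sk x s) v - qf SigmaP v\<bar> \<le> \<epsilon> * qf SigmaP v"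
      by (metis (no_types, lifting) bchoice)
    define E where "E = (\<Union>s\<in>Sub. Af s \<times> {s})"
    define pm where "pm = pmf_of_set Sub"
    have M_eq2: "M = PM \<Otimes>\<^sub>M measure_pmf pm" unfolding M_eq PM_def pm_def Sub_def ..
    interpret pmS: prob_space "measure_pmf pm" by (rule prob_space_measure_pmf)
    interpret Mp: prob_space M unfolding M_eq2 by (intro prob_space_pair) (unfold_locales)
    have Es: "E \<in> sets M" unfolding E_def M_eq2 using Af(1) Sub_fin by (intro sets.finite_UN) auto
    have Em: "measure M E \<ge> 1 - delta"
    proof -
      have "emeasure M E = (\<Sum>s\<in>Sub. emeasure M (Af s \<times> {s}))"
        unfolding E_def
      proof (rule sum_emeasure[symmetric])
        show "(\<lambda>s. Af s \<times> {s}) ` Sub \<subseteq> sets M" unfolding M_eq2 using Af(1) by auto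
        show "disjoint_family_on (\<lambda>s. Af s \<times> {s}) Sub" by (auto simp: disjoint_family_on_def)
      qed (rule Sub_fin)
      also have "\<dots> = (\<Sum>s\<in>Sub. ennreal (measure PM (Af s) * (1 / real (card Sub))))"
      proof (intro sum.cong refl)
        fix s assume s: "s \<in> Sub"
        have "emeasure M (Af s \<times> {s}) = emeasure PM (Af s) * emeasure (measure_pmf pm) {s}"
          unfolding M_eq2 using Af(1)[OF s] by (intro sigma_finite_measure.emeasure_pair_measure_Times[OF prob_space_imp_sigma_finite[OF prob_space_measure_pmf]]) auto
        also have "\<dots> = ennreal (measure PM (Af s)) * ennreal (1 / real (card Sub))"
          unfolding pm_def using s Sub_fin Sub_ne by (simp add: emeasure_pmf_single PMp.emeasure_eq_measure)
        also have "\<dots> = ennreal (measure PM (Af s) * (1 / real (card Sub)))"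
          by (rule ennreal_mult[symmetric]) auto
        finally show "emeasure M (Af s \<times> {s}) = ennreal (measure PM (Af s) * (1 / real (card Sub)))" .
      qed
      also have "\<dots> = ennreal (\<Sum>s\<in>Sub. measure PM (Af s) * (1 / real (card Sub)))"
        by (rule sum_ennreal) simp
      finally have e: "measure M E = (\<Sum>s\<in>Sub. measure PM (Af s) * (1 / real (card Sub)))"
        using Mp.emeasure_eq_measure by (simp add: sum_nonneg)
      have "(\<Sum>s\<in>Sub. (1 - delta) * (1 / real (card Sub))) \<le> (\<Sum>s\<in>Sub. measure PM (Af s) * (1 / real (card Sub)))"
        using Af(2) by (intro sum_mono mult_right_mono) auto
      also have "(\<Sum>s\<in>Sub. (1 - delta) * (1 / real (card Sub))) = 1 - delta"
        using Sub_fin Sub_ne by simp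
      finally show ?thesis unfolding e .
    qed
    show ?thesis
    proof (rule bexI[OF _ Es], intro conjI Em ballI)
      fix z assume z: "z \<in> E"
      obtain x s where zxs: "z = (x, s)" by (cases z)
      have s: "s \<in> Sub" and x: "x \<in> Af s" using z unfolding zxs E_def by auto
      have N0: "real N > 0" and k0: "real k > 0" using N1 k1 by auto
      have sN: "symm (SN x)" unfolding SN_def by (rule symm_emp)
      have sk: "symm (Sk x s)" unfolding Sk_def by (rule symm_emp)
      have emp_bound: "\<bar>qf ((1 / real n) *\<^sub>R (\<Sum>i<n. outer (w i) (w i))) y - qf SigmaP y\<bar> \<le> (xq + 1) * qf SigmaP y"
        if n0: "real n > 0" and wb: "\<And>i. norm (w i) \<le> K" for n w y
      proof -
        have q0: "qf SigmaP y \<ge> 0" using lo[of y] lam by (smt (verit) mult_nonneg_nonneg zero_le_power2)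
        have "(\<Sum>i<n. (w i \<bullet> y)^2) \<le> (\<Sum>i<n. K^2 * (norm y)^2)"
        proof (intro sum_mono)
          fix i
          have "(w i \<bullet> y)^2 \<le> (norm (w i))^2 * (norm y)^2" by (rule sq_inner_bound)
          also have "\<dots> \<le> K^2 * (norm y)^2" using wb[of i] by (intro mult_right_mono power_mono) auto
          finally show "(w i \<bullet> y)^2 \<le> K^2 * (norm y)^2" .
        qed
        then have "qf ((1 / real n) *\<^sub>R (\<Sum>i<n. outer (w i) (w i))) y \<le> K^2 * (norm y)^2"
          unfolding qf_emp using n0 by (simp add: field_simps)
        also have "\<dots> = xq * (lam * (norm y)^2)" unfolding xlam by simp
        also have "\<dots> \<le> xq * qf SigmaP y" using lo[of y] x1 by (intro mult_left_mono) auto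
        finally have a: "qf ((1 / real n) *\<^sub>R (\<Sum>i<n. outer (w i) (w i))) y \<le> xq * qf SigmaP y" .
        have b: "qf ((1 / real n) *\<^sub>R (\<Sum>i<n. outer (w i) (w i))) y \<ge> 0" unfolding qf_emp using n0 by (simp add: sum_nonneg)
        show ?thesis using a b q0 by (simp add: abs_le_iff algebra_simps)
      qed
      have hN: "\<bar>qf (SN x) y - qf SigmaP y\<bar> \<le> \<alpha> * qf SigmaP y" for y
      proof -
        have "\<bar>qf (SN x - SigmaP) y\<bar> \<le> \<epsilon> * (1 + \<nu>)^2 / (1 - 2 * \<nu> - \<nu>^2) * qf SigmaP y"
        proof (rule net_argument[OF symm_diff[OF sN sS] sS pd])
          show "\<bar>qf (SN x - SigmaP) y\<bar> \<le> (xq + 1) * qf SigmaP y" for y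
            unfolding qf_diff_mat SN_def using emp_bound[OF N0, of "\<lambda>i. phiL (x i)"] Kb by blast
          show "\<And>u. qf SigmaP u = 1 \<Longrightarrow> \<exists>v\<in>G. qf SigmaP (u - v) \<le> \<nu>^2" by (rule G(3))
          show "0 \<le> \<nu>" "2 * \<nu> + \<nu>^2 < 1" unfolding \<nu>_def by (auto simp: power2_eq_square)
          show "\<And>v. v \<in> G \<Longrightarrow> \<bar>qf (SN x - SigmaP) v\<bar> \<le> \<epsilon> * qf SigmaP v"
            unfolding qf_diff_mat using Af(3)[OF s x] by blast
          show "0 \<le> \<epsilon>" using eps by simp
        qed
        then show ?thesis unfolding qf_diff_mat \<alpha>_def .
      qed
      have hk: "\<bar>qf (Sk x s) y - qf SigmaP y\<bar> \<le> \<alpha> * qf SigmaP y" for y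
      proof -
        have "\<bar>qf (Sk x s - SigmaP) y\<bar> \<le> \<epsilon> * (1 + \<nu>)^2 / (1 - 2 * \<nu> - \<nu>^2) * qf SigmaP y"
        proof (rule net_argument[OF symm_diff[OF sk sS] sS pd])
          show "\<bar>qf (Sk x s - SigmaP) y\<bar> \<le> (xq + 1) * qf SigmaP y" for y
            unfolding qf_diff_mat Sk_def using emp_bound[OF k0, of "\<lambda>i. phiL (x (s i))"] Kb by blast
          show "\<And>u. qf SigmaP u = 1 \<Longrightarrow> \<exists>v\<in>G. qf SigmaP (u - v) \<le> \<nu>^2" by (rule G(3))
          show "0 \<le> \<nu>" "2 * \<nu> + \<nu>^2 < 1" unfolding \<nu>_def by (auto simp: power2_eq_square)
          show "\<And>v. v \<in> G \<Longrightarrow> \<bar>qf (Sk x s - SigmaP) v\<bar> \<le> \<epsilon> * qf SigmaP v"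
            unfolding qf_diff_mat using Af(3)[OF s x] by blast
          show "0 \<le> \<epsilon>" using eps by simp
        qed
        then show ?thesis unfolding qf_diff_mat \<alpha>_def .
      qed
      have main: "spec_norm (length xs) (\<lambda>i j. pred_cov sigma2 N (Sk x s) phiL xs i j - pred_cov sigma2 N (SN x) phiL xs i j)
          \<le> real (length xs) * (2 * K^4 / lambda_min SigmaP) * sqrt (8 * ln (4 * CARD('r) / delta) / (3 * real k))" for xs
      proof -
        define c where "c = real N / sigma2"
        have c: "c > 0" unfolding c_def using N0 sig by simp
        define D where "D = matrix_inv (c *\<^sub>R Sk x s + mat 1) - matrix_inv (c *\<^sub>R SN x + mat 1)"
        have Db: "\<bar>p \<bullet> (D *v q)\<bar> \<le> (\<alpha> / (2 * (1 - \<alpha>))) * norm p * norm q" for p q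
          using core[OF sS sk sN c al pd hk hN, of p q] unfolding D_def
          by (simp add: matrix_vector_mult_diff_rdistrib inner_diff_right)
        have b0: "\<alpha> / (2 * (1 - \<alpha>)) \<ge> 0" using al by simp
        have sn: "spec_norm (length xs) (\<lambda>i j. phiL (xs ! i) \<bullet> (D *v phiL (xs ! j))) \<le> real (length xs) * ((\<alpha> / (2 * (1 - \<alpha>))) * K^2)"
          by (rule spec_norm_bound[OF Db _ b0]) (rule Kb)
        have pc: "(\<lambda>i j. pred_cov sigma2 N (Sk x s) phiL xs i j - pred_cov sigma2 N (SN x) phiL xs i j)
                = (\<lambda>i j. phiL (xs ! i) \<bullet> (D *v phiL (xs ! j)))"
          unfolding pred_cov_def D_def c_def by (simp add: matrix_vector_mult_diff_rdistrib inner_diff_right)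
        have "real (length xs) * ((\<alpha> / (2 * (1 - \<alpha>))) * K^2) \<le> real (length xs) * (\<tau> * K^2)"
          using beta K2 by (intro mult_left_mono mult_right_mono) auto
        also have "real (length xs) * (\<tau> * K^2) = real (length xs) * (2 * K^4 / lambda_min SigmaP) * sqrt (8 * ln (4 * CARD('r) / delta) / (3 * real k))"
          unfolding \<tau>_def t_def lg_def[symmetric] lam_def[symmetric] xq_def using lam
          by (simp add: field_simps power2_eq_square power4_eq_xxxx)
        finally have fin: "real (length xs) * ((\<alpha> / (2 * (1 - \<alpha>))) * K^2) \<le> real (length xs) * (2 * K^4 / lambda_min SigmaP) * sqrt (8 * ln (4 * CARD('r) / delta) / (3 * real k))" .

        show ?thesis using sn fin unfolding pc by linarith
      qed
      show "case z of (x, s) \<Rightarrow> \<forall>xs. let SigN = (1 / real N) *\<^sub>R (\<Sum>i<N. outer (phiL (x i)) (phiL (x i)));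
             Sigk = (1 / real k) *\<^sub>R (\<Sum>i<k. outer (phiL (x (s i))) (phiL (x (s i))))
           in spec_norm (length xs) (\<lambda>i j. pred_cov sigma2 N Sigk phiL xs i j - pred_cov sigma2 N SigN phiL xs i j)
              \<le> real (length xs) * (2 * K^4 / lambda_min SigmaP) * sqrt (8 * ln (4 * CARD('r) / delta) / (3 * real k))"
        unfolding zxs Let_def using main unfolding SN_def Sk_def by simp
    qed
  qed
qed


end
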